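(* Let $\mathcal{N}$ be a chemical reaction network with stoichiometric subspace of dimension $s$, let $\{\omega^1,\dots,\omega^d\}$ be a reduced basis of $\Gamma^\perp$ and $\widetilde f_\kappa$ the associated extended rate function. The terms in the expansion of $\det(J_c(\widetilde f_\kappa))$ are monomials in $\kappa$ of total degree $s$ and of degree at most one in each rate constant. Further, let $R=\{y^1\to y'^1,\dots,y^s\to y'^s\}$ be a set of $s$ reactions of $\mathcal{N}$. For $c\in\mathbb{R}^n_+$, the coefficient of the monomial $\prod_{i=1}^s k_{y^i\to y'^i}$ in $\det(J_c(\widetilde f_\kappa))$ is $$(-1)^s\,c^{-\mathbf{1}+\sum_{i=1}^s y^i}\sum_{I\in\mathcal{O}_d(\mathcal{N})}\det(\mathcal{Y}(R)_I)\det(\Gamma(R)_I)\prod_{i\in I}c_i,$$ and equivalently it equals $$(-1)^d\,c^{-\mathbf{1}+\sum_{i=1}^s y^i}\sum_{R'\in\mathcal{R}_s,\ R'\cap\mathcal{R}=R}\sigma(R')\prod_{S_i\to 0\in R'\setminus R}c_i.$$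
   Context: A chemical reaction network $\mathcal{N}=(\mathcal{S},\mathcal{C},\mathcal{R})$ consists of a finite set of species $\mathcal{S}=\{S_1,\dots,S_n\}$, a finite set of complexes $\mathcal{C}\subset\mathbb{Z}_{\ge 0}^n$ (species $S_i$ identified with the $i$-th standard basis vector; zero complex allowed), and a finite set of reactions $\mathcal{R}\subset\mathcal{C}\times\mathcal{C}$, written $y\to y'$, with $y\ne y'$. A rate vector is $\kappa=(k_{y\to y'})\in\mathbb{R}_+^{\mathcal{R}}$ ($\mathbb{R}_+$ the positive reals); the mass-action species formation rate function is $f_\kappa(c)=\sum_{y\to y'\in\mathcal{R}}k_{y\to y'}c^y(y'-y)$ with $c^y=\prod_i c_i^{y_i}$ (also for integer exponents, e.g. $c^{-\mathbf 1+v}$ with $\mathbf 1=(1,\dots,1)$), components $f_{\kappa,i}$. The stoichiometric subspace is $\Gamma=\mathrm{span}\{y'-y:y\to y'\in\mathcal{R}\}$, $s=\dim\Gamma$, $d=n-s$. A basis $\{\omega^1,\dots,\omega^d\}$ of $\Gamma^\perp$ with $\omega^i=(\lambda^i_1,\dots,\lambda^i_n)$ is reduced if $\lambda^i_i=1$ and $\lambda^i_j=0$ for $j\in\{1,\dots,d\}$, $j\ne i$ (species assumed ordered so one exists). The extended rate function is $\widetilde f_\kappa(c)=(\omega^1\cdot c,\dots,\omega^d\cdot c,f_{\kappa,d+1}(c),\dots,f_{\kappa,n}(c))$; $J_c$ is the Jacobian at $c$. Let $\mathcal{O}(\mathcal{N})=\{i: S_i\to 0\notin\mathcal{R}\}$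 and $\mathcal{O}_d(\mathcal{N})$ the set of subsets of $\mathcal{O}(\mathcal{N})$ of cardinality $d$. For a set $R$ of $m$ reactions $y^i\to y'^i$, $\mathcal{Y}(R)$ is the $n\times m$ matrix with $i$-th column $y^i$ and $\Gamma(R)$ the $n\times m$ matrix with $i$-th column $y^i-y'^i$; for an $n\times s$ matrix $M$ and $I\in\mathcal{O}_d(\mathcal{N})$, $M_I$ is the $s\times s$ matrix obtained by deleting the rows with index in $I$. For a set $R'$ of $n$ reactions, $\sigma(R')=(-1)^n\det(\mathcal{Y}(R'))\det(\Gamma(R'))$. $\mathcal{R}_s$ is the set of all sets $R'$ of $n$ reactions of the form $R\cup\{S_i\to 0: i\in I\}$, where $R$ is a set of $s$ reactions of $\mathcal{R}$ and $I\in\mathcal{O}_d(\mathcal{N})$. *)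

theory Defs
  imports "HOL-Analysis.Analysis" "Jordan_Normal_Form.Determinant"
    "Jordan_Normal_Form.DL_Submatrix" "Jordan_Normal_Form.DL_Rank"
begin

text \<open>Species are indexed 0,...,n-1 (the paper's S_1,...,S_n shifted by one).
  A complex is a function nat => nat vanishing outside {0..<n}; a reaction y -> y'
  is the pair (y, y').\<close>

type_synonym cplx = "nat \<Rightarrow> nat"
type_synonym rxn = "cplx \<times> cplx"

definition crn :: "nat \<Rightarrow> rxn set \<Rightarrow> bool" where
  "crn n Rs \<longleftrightarrow> finite Rs \<and>
     (\<forall>(y, y') \<in> Rs. y \<noteq> y' \<and> (\<forall>i\<ge>n. y i = 0 \<and> y' i = 0))"

definition outflow :: "nat \<Rightarrow> rxn" where
  "outflow i = ((\<lambda>j. if j = i then 1 else 0), (\<lambda>_. 0))"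

definition cpow :: "nat \<Rightarrow> (nat \<Rightarrow> real) \<Rightarrow> (nat \<Rightarrow> int) \<Rightarrow> real" where
  "cpow n c v = (\<Prod>j<n. c j powi v j)"

definition rate_fun :: "nat \<Rightarrow> rxn set \<Rightarrow> (rxn \<Rightarrow> real) \<Rightarrow> (nat \<Rightarrow> real) \<Rightarrow> nat \<Rightarrow> real" where
  "rate_fun n Rs \<kappa> c i =
     (\<Sum>r\<in>Rs. \<kappa> r * (\<Prod>j<n. c j ^ fst r j) * (real (snd r i) - real (fst r i)))"

definition ext_rate_fun :: "nat \<Rightarrow> nat \<Rightarrow> (nat \<Rightarrow> nat \<Rightarrow> real) \<Rightarrow> rxn set \<Rightarrow> (rxn \<Rightarrow> real)
    \<Rightarrow> (nat \<Rightarrow> real) \<Rightarrow> nat \<Rightarrow> real" where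
  "ext_rate_fun n d \<omega> Rs \<kappa> c i =
     (if i < d then (\<Sum>j<n. \<omega> i j * c j) else rate_fun n Rs \<kappa> c i)"

definition partial :: "((nat \<Rightarrow> real) \<Rightarrow> real) \<Rightarrow> (nat \<Rightarrow> real) \<Rightarrow> nat \<Rightarrow> real" where
  "partial F c j = deriv (\<lambda>t. F (c(j := t))) (c j)"

definition jacobian_mat :: "nat \<Rightarrow> ((nat \<Rightarrow> real) \<Rightarrow> nat \<Rightarrow> real) \<Rightarrow> (nat \<Rightarrow> real) \<Rightarrow> real mat" where
  "jacobian_mat n F c = mat n n (\<lambda>(i, j). partial (\<lambda>x. F x i) c j)"

text \<open>A fixed enumeration of a finite set of reactions (the formulas below do not
  depend on the choice, since they only involve products of two determinants of
  matrices with the same column order).\<close>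
definition enum_rxns :: "rxn set \<Rightarrow> rxn list" where
  "enum_rxns R = (SOME xs. distinct xs \<and> set xs = R)"

definition Ymat :: "nat \<Rightarrow> rxn set \<Rightarrow> real mat" where
  "Ymat n R = (let xs = enum_rxns R in
     mat n (length xs) (\<lambda>(i, k). real (fst (xs ! k) i)))"

definition Gmat :: "nat \<Rightarrow> rxn set \<Rightarrow> real mat" where
  "Gmat n R = (let xs = enum_rxns R in
     mat n (length xs) (\<lambda>(i, k). real (fst (xs ! k) i) - real (snd (xs ! k) i)))"

text \<open>Dimension s of the stoichiometric subspace: dimension of the span of the
  reaction vectors y' - y (the column space of Gamma(R_all), up to sign).\<close>
definition stoich_dim :: "nat \<Rightarrow> rxn set \<Rightarrow> nat" where
  "stoich_dim n Rs = vec_space.rank n (Gmat n Rs)"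

definition del_rows :: "real mat \<Rightarrow> nat set \<Rightarrow> real mat" where
  "del_rows M I = submatrix M ({0..<dim_row M} - I) {0..<dim_col M}"

definition Oset :: "nat \<Rightarrow> rxn set \<Rightarrow> nat set" where
  "Oset n Rs = {i. i < n \<and> outflow i \<notin> Rs}"

definition Od :: "nat \<Rightarrow> rxn set \<Rightarrow> nat \<Rightarrow> nat set set" where
  "Od n Rs d = {I. I \<subseteq> Oset n Rs \<and> card I = d}"

definition sigma :: "nat \<Rightarrow> rxn set \<Rightarrow> real" where
  "sigma n R' = (-1) ^ n * det (Ymat n R') * det (Gmat n R')"

definition Rs_sets :: "nat \<Rightarrow> rxn set \<Rightarrow> nat \<Rightarrow> rxn set set" where
  "Rs_sets n Rs s = {R \<union> outflow ` I | R I. R \<subseteq> Rs \<and> card R = s \<and> I \<in> Od n Rs (n - s)}"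

definition reduced_basis :: "nat \<Rightarrow> rxn set \<Rightarrow> nat \<Rightarrow> (nat \<Rightarrow> nat \<Rightarrow> real) \<Rightarrow> bool" where
  "reduced_basis n Rs d \<omega> \<longleftrightarrow>
     \<comment> \<open>each omega i lies in Gamma-perp\<close>
     (\<forall>i<d. \<forall>r\<in>Rs. (\<Sum>j<n. \<omega> i j * (real (snd r j) - real (fst r j))) = 0) \<and>
     \<comment> \<open>linearly independent\<close>
     (\<forall>a. (\<forall>j<n. (\<Sum>i<d. a i * \<omega> i j) = 0) \<longrightarrow> (\<forall>i<d. a i = 0)) \<and>
     \<comment> \<open>spanning Gamma-perp\<close>
     (\<forall>v. (\<forall>r\<in>Rs. (\<Sum>j<n. v j * (real (snd r j) - real (fst r j))) = 0) \<longrightarrow>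
          (\<exists>a. \<forall>j<n. v j = (\<Sum>i<d. a i * \<omega> i j))) \<and>
     \<comment> \<open>reduced form\<close>
     (\<forall>i<d. \<omega> i i = 1 \<and> (\<forall>j<d. j \<noteq> i \<longrightarrow> \<omega> i j = 0))"

end

theory Submission
  imports Defs
begin



lemma pick_upt: "i < s \<Longrightarrow> pick {0..<s} i = i"
proof (induction i)
  case 0
  then show ?case by (auto intro!: Least_equality)
next
  case (Suc i)
  then show ?case by (auto intro!: Least_equality)
qed

lemma pick_inj_card: assumes "i < card K" "j < card K" "pick K i = pick K j" shows "i = j"
proof (rule ccontr)
  assume "i \<noteq> j"
  then consider "i < j" | "j < i" by linarith
  thus False
  proof cases
    case 1 thus False using pick_mono_le[OF assms(2) 1] assms(3) by simp
  next
    case 2 thus False using pick_mono_le[OF assms(1) 2] assms(3) by simp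
  qed
qed

lemma pick_image: assumes "finite K" shows "pick K ` {0..<card K} = K"
proof
  show "pick K ` {0..<card K} \<subseteq> K" using pick_in_set_le by auto
  show "K \<subseteq> pick K ` {0..<card K}"
  proof
    fix x assume x: "x \<in> K"
    have "{a\<in>K. a < x} \<subset> K" using x by auto
    hence "card {a\<in>K. a < x} < card K" using assms by (simp add: psubset_card_mono)
    moreover have "x = pick K (card {a\<in>K. a < x})" using pick_card_in_set[OF x] by simp
    ultimately show "x \<in> pick K ` {0..<card K}" by (simp add: image_iff) (metis atLeastLessThan_iff zero_le)
  qed
qed

lemma card_lt_subset: assumes "K \<subseteq> {0..<m}" shows "{i. i < m \<and> i \<in> K} = K"
  using assms by auto


lemma cauchy_binet:
  fixes A B :: "'a::comm_ring_1 mat"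
  assumes A: "A \<in> carrier_mat s m" and B: "B \<in> carrier_mat m s"
  shows "det (A * B) = (\<Sum>K\<in>{K. K \<subseteq> {0..<m} \<and> card K = s}.
            det (submatrix A {0..<s} K) * det (submatrix B K {0..<s}))"
proof -
  define F where "F = {f. (\<forall>i\<in>{0..<s}. f i \<in> {0..<m}) \<and> (\<forall>i. i \<notin> {0..<s} \<longrightarrow> f i = i)}"
  define g where "g f = (\<Prod>i=0..<s. A $$ (i, f i)) * det (mat\<^sub>r s s (\<lambda>i. row B (f i)))" for f
  define Fi where "Fi = {f\<in>F. inj_on f {0..<s}}"
  define Ks where "Ks = {K. K \<subseteq> {0..<m} \<and> card K = s}"
  define P where "P = {p. p permutes {0..<s}}"
  define \<phi> where "\<phi> = (\<lambda>(K,p). (\<lambda>i. if i < s then pick K (p i) else i))"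
  have finF: "finite F" unfolding F_def by (rule finite_bounded_functions) auto
  have finKs: "finite Ks" unfolding Ks_def by (rule finite_subset[of _ "Pow {0..<m}"]) auto
  have finP: "finite P" unfolding P_def by (rule finite_permutations) auto
  have "A * B = mat\<^sub>r s s (\<lambda>i. finsum_vec TYPE('a) s (\<lambda>k. A $$ (i,k) \<cdot>\<^sub>v row B k) {0..<m})"
    by (rule mat_mul_finsum_alt[OF A B])
  hence "det (A*B) = sum (\<lambda>f. det (mat\<^sub>r s s (\<lambda>i. A $$ (i, f i) \<cdot>\<^sub>v row B (f i)))) F"
    unfolding F_def by (simp add: det_linear_rows_sum[where S="{0..<m}"] B)
  also have "\<dots> = sum g F"
  proof (rule sum.cong[OF refl])
    fix f assume "f \<in> F"
    show "det (mat\<^sub>r s s (\<lambda>i. A $$ (i, f i) \<cdot>\<^sub>v row B (f i))) = g f"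
      unfolding g_def proof (rule det_rows_mul)
        show "(\<lambda>i. row B (f i)) \<in> {0..<s} \<rightarrow> carrier_vec s"
        proof
          fix i show "row B (f i) \<in> carrier_vec s" using B unfolding carrier_vec_def by simp
        qed
      qed
  qed
  also have "\<dots> = sum g Fi"
  proof (rule sum.mono_neutral_right[OF finF])
    show "Fi \<subseteq> F" unfolding Fi_def by auto
    show "\<forall>f\<in>F - Fi. g f = 0"
    proof
      fix f assume f: "f \<in> F - Fi"
      then obtain i j where ij: "i < s" "j < s" "i \<noteq> j" "f i = f j"
        unfolding Fi_def inj_on_def by auto
      have "det (mat\<^sub>r s s (\<lambda>i. row B (f i))) = 0"
        proof (rule det_identical_rows[OF _ ij(3) ij(1) ij(2)])
        show "mat\<^sub>r s s (\<lambda>i. row B (f i)) \<in> carrier_mat s s" by simp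
        have "dim_vec (row B (f i)) = s" "dim_vec (row B (f j)) = s" using B by auto
        thus "row (mat\<^sub>r s s (\<lambda>i. row B (f i))) i = row (mat\<^sub>r s s (\<lambda>i. row B (f i))) j"
          using ij by (simp only: row_mat_of_row_fun)
      qed
      thus "g f = 0" unfolding g_def by simp
    qed
  qed
  also have "Fi = \<phi> ` (Sigma Ks (\<lambda>_. P))"
  proof
    show "\<phi> ` (Sigma Ks (\<lambda>_. P)) \<subseteq> Fi"
    proof
      fix f assume "f \<in> \<phi> ` (Sigma Ks (\<lambda>_. P))"
      then obtain K p where K: "K \<in> Ks" and p: "p \<in> P" and f: "f = \<phi> (K,p)" by auto
      have cK: "card K = s" and Km: "K \<subseteq> {0..<m}" using K unfolding Ks_def by auto
      have ps: "\<And>i. i < s \<Longrightarrow> p i < s" using p unfolding P_def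
        using permutes_in_image[of p "{0..<s}"] by simp
      have "\<forall>i\<in>{0..<s}. f i \<in> {0..<m}"
      proof
        fix i assume i: "i \<in> {0..<s}"
        hence "p i < card K" using ps cK by simp
        hence "pick K (p i) \<in> K" by (rule pick_in_set_le)
        thus "f i \<in> {0..<m}" using Km i unfolding f \<phi>_def by auto
      qed
      moreover have "\<forall>i. i \<notin> {0..<s} \<longrightarrow> f i = i" unfolding f \<phi>_def by auto
      moreover have "inj_on f {0..<s}"
      proof (rule inj_onI)
        fix i j assume "i \<in> {0..<s}" "j \<in> {0..<s}" "f i = f j"
        hence "pick K (p i) = pick K (p j)" "i < s" "j < s" unfolding f \<phi>_def by auto
        hence "p i = p j" using pick_inj_card[of "p i" K "p j"] ps cK by simp
        moreover have "inj p" using p unfolding P_def by (simp add: permutes_inj)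
        ultimately show "i = j" by (simp add: inj_eq)
      qed
      ultimately show "f \<in> Fi" unfolding Fi_def F_def by auto
    qed
    show "Fi \<subseteq> \<phi> ` (Sigma Ks (\<lambda>_. P))"
    proof
      fix f assume f: "f \<in> Fi"
      define K where "K = f ` {0..<s}"
      define p where "p = (\<lambda>i. if i < s then card {a\<in>K. a < f i} else i)"
      have inj: "inj_on f {0..<s}" and fm: "\<And>i. i < s \<Longrightarrow> f i < m" and fo: "\<And>i. \<not> i < s \<Longrightarrow> f i = i"
        using f unfolding Fi_def F_def by auto
      have cK: "card K = s" unfolding K_def using card_image[OF inj] by simp
      have KKs: "K \<in> Ks" unfolding Ks_def K_def using fm cK K_def by auto
      have finK: "finite K" unfolding K_def by auto
      have pl: "\<And>i. i < s \<Longrightarrow> p i < s"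
      proof -
        fix i assume i: "i < s"
        have "f i \<in> K" using i unfolding K_def by auto
        hence "{a\<in>K. a < f i} \<subset> K" by auto
        hence "card {a\<in>K. a < f i} < card K" using finK by (simp add: psubset_card_mono)
        thus "p i < s" using i cK unfolding p_def by simp
      qed
      have pick_p: "\<And>i. i < s \<Longrightarrow> pick K (p i) = f i"
      proof -
        fix i assume "i < s"
        hence "f i \<in> K" unfolding K_def by auto
        thus "pick K (p i) = f i" unfolding p_def using \<open>i < s\<close> pick_card_in_set by simp
      qed
      have "p permutes {0..<s}"
      proof (rule inj_imp_permutes)
        show "inj_on p {0..<s}"
        proof (rule inj_onI)
          fix i j assume "i \<in> {0..<s}" "j \<in> {0..<s}" "p i = p j"
          hence "f i = f j" using pick_p[of i] pick_p[of j] by simp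
          thus "i = j" using inj \<open>i \<in> {0..<s}\<close> \<open>j \<in> {0..<s}\<close> by (simp add: inj_on_eq_iff)
        qed
        show "finite {0..<s}" by simp
        show "\<And>x. x \<in> {0..<s} \<Longrightarrow> p x \<in> {0..<s}" using pl by simp
        show "\<And>x. x \<notin> {0..<s} \<Longrightarrow> p x = x" unfolding p_def by simp
      qed
      hence "p \<in> P" unfolding P_def by simp
      moreover have "f = \<phi> (K, p)" unfolding \<phi>_def using pick_p fo by auto
      ultimately show "f \<in> \<phi> ` (Sigma Ks (\<lambda>_. P))" using KKs by blast
    qed
  qed
  also have "sum g (\<phi> ` (Sigma Ks (\<lambda>_. P))) = sum (g \<circ> \<phi>) (Sigma Ks (\<lambda>_. P))"
  proof (rule sum.reindex)
    show "inj_on \<phi> (Sigma Ks (\<lambda>_. P))"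
    proof (rule inj_onI, clarify)
      fix K p K' p' assume K: "K \<in> Ks" and p: "p \<in> P" and K': "K' \<in> Ks" and p': "p' \<in> P"
        and eq: "\<phi> (K, p) = \<phi> (K', p')"
      have cK: "card K = s" "card K' = s" using K K' unfolding Ks_def by auto
      have cK2: "finite K" "finite K'" using K K' unfolding Ks_def
        using finite_subset[OF _ finite_atLeastLessThan] by auto
      have eqi: "pick K (p i) = pick K' (p' i)" if "i < s" for i
        using fun_cong[OF eq, of i] that unfolding \<phi>_def by simp
      have pp: "p ` {0..<s} = {0..<s}" "p' ` {0..<s} = {0..<s}" using p p' unfolding P_def
        by (simp_all add: permutes_image)
      have "K = pick K ` (p ` {0..<s})" using pick_image[OF cK2(1)] cK pp by simp
      also have "\<dots> = (\<lambda>i. pick K (p i)) ` {0..<s}" by (simp add: image_image)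
      also have "\<dots> = (\<lambda>i. pick K' (p' i)) ` {0..<s}"
        using eqi by (intro image_cong) auto
      also have "\<dots> = pick K' ` (p' ` {0..<s})" by (simp add: image_image)
      also have "\<dots> = K'" using pick_image[OF cK2(2)] cK pp by simp
      finally have KK: "K = K'" .
      have "p = p'"
      proof
        fix i
        show "p i = p' i"
        proof (cases "i < s")
          case True
          hence "pick K (p i) = pick K (p' i)" using eqi KK by simp
          moreover have "p i \<in> p ` {0..<s}" "p' i \<in> p' ` {0..<s}" using True by simp_all
          hence "p i < card K" "p' i < card K" using cK pp by simp_all
          ultimately show ?thesis using pick_inj_card by blast
        next
          case False
          thus ?thesis using p p' permutes_not_in[of p "{0..<s}" i] permutes_not_in[of p' "{0..<s}" i]
            unfolding P_def by simp
        qed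
      qed
      thus "K = K' \<and> p = p'" using KK by simp
    qed
  qed
  also have "\<dots> = (\<Sum>K\<in>Ks. \<Sum>p\<in>P. g (\<phi> (K,p)))"
    by (subst sum.Sigma[OF finKs]) (use finP in auto)
  also have "\<dots> = (\<Sum>K\<in>Ks. det (submatrix A {0..<s} K) * det (submatrix B K {0..<s}))"
  proof (rule sum.cong[OF refl])
    fix K assume K: "K \<in> Ks"
    have cK: "card K = s" and Km: "K \<subseteq> {0..<m}" using K unfolding Ks_def by auto
    define AK where "AK = submatrix A {0..<s} K"
    define BK where "BK = submatrix B K {0..<s}"
    have cs: "{i. i < s \<and> i \<in> {0..<s}} = {0..<s}" by auto
    have AKc: "AK \<in> carrier_mat s s" unfolding AK_def submatrix_def using A card_lt_subset[OF Km] cK cs by simp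
    have BKc: "BK \<in> carrier_mat s s" unfolding BK_def submatrix_def using B card_lt_subset[OF Km] cK cs by simp
    have AKi: "AK $$ (i,j) = A $$ (i, pick K j)" if "i < s" "j < s" for i j
      unfolding AK_def submatrix_def using A card_lt_subset[OF Km] cK cs that pick_upt by simp
    have BKi: "BK $$ (i,j) = B $$ (pick K i, j)" if "i < s" "j < s" for i j
      unfolding BK_def submatrix_def using B card_lt_subset[OF Km] cK cs that pick_upt by simp
    have "g (\<phi> (K,p)) = (signof p * (\<Prod>i=0..<s. AK $$ (i, p i))) * det BK" if p: "p \<in> P" for p
    proof -
      have ps: "\<And>i. i < s \<Longrightarrow> p i < s" using p unfolding P_def
        using permutes_in_image[of p "{0..<s}"] by simp
      have "mat\<^sub>r s s (\<lambda>i. row B (\<phi> (K,p) i)) = mat s s (\<lambda>(i,j). BK $$ (p i, j))"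
      proof (rule eq_matI)
        fix i j assume "i < dim_row (mat s s (\<lambda>(i,j). BK $$ (p i, j)))" "j < dim_col (mat s s (\<lambda>(i,j). BK $$ (p i, j)))"
        hence ij: "i < s" "j < s" by simp_all
        have "\<phi> (K,p) i = pick K (p i)" using ij by (simp add: \<phi>_def)
        then show "mat\<^sub>r s s (\<lambda>i. row B (\<phi> (K,p) i)) $$ (i,j) = mat s s (\<lambda>(i,j). BK $$ (p i, j)) $$ (i,j)"
          using ij carrier_matD[OF B] BKi[OF ps[OF ij(1)] ij(2)] by (simp add: row_def)
      qed simp_all
      hence "det (mat\<^sub>r s s (\<lambda>i. row B (\<phi> (K,p) i))) = signof p * det BK"
        using det_permute_rows[OF BKc, of p] p unfolding P_def by simp
      moreover have "(\<Prod>i=0..<s. A $$ (i, \<phi> (K,p) i)) = (\<Prod>i=0..<s. AK $$ (i, p i))"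
        by (rule prod.cong[OF refl]) (use ps AKi in \<open>simp add: \<phi>_def\<close>)
      ultimately show ?thesis unfolding g_def by simp
    qed
    hence "(\<Sum>p\<in>P. g (\<phi> (K,p))) = (\<Sum>p\<in>P. signof p * (\<Prod>i=0..<s. AK $$ (i, p i))) * det BK"
      by (simp add: sum_distrib_right)
    also have "\<dots> = det AK * det BK" unfolding det_def'[OF AKc] P_def by simp
    finally show "(\<Sum>p\<in>P. g (\<phi> (K,p))) = det (submatrix A {0..<s} K) * det (submatrix B K {0..<s})"
      unfolding AK_def BK_def .
  qed
  finally show ?thesis unfolding Ks_def .
qed


lemma rank_le_n:
  assumes A: "(A :: real mat) \<in> carrier_mat n nc"
  shows "vec_space.rank n A \<le> n"
proof -
  interpret V: vec_space "TYPE(real)" n .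
  have sub: "set (cols A) \<subseteq> carrier_vec n" using A cols_dim by (metis carrier_matD(1))
  have "subspace class_ring (V.span (set (cols A))) V.V" using V.span_is_subspace[OF sub] .
  moreover have "vectorspace.fin_dim class_ring (V.span_vs (set (cols A)))"
    using V.fin_dim_span_cols[OF A] .
  ultimately have "V.rank A \<le> V.dim" unfolding V.rank_def
    using V.subspace_dim V.fin_dim by blast
  thus ?thesis using V.dim_is_n by simp
qed


lemma signof_sq: "(signof p :: real) * signof p = 1"
  by (cases p rule: sign_cases) simp_all

lemma det_cols_perm:
  assumes q: "q permutes {0..<c}"
  shows "det (mat c c (\<lambda>(i,k). f i (q k))) = signof q * det (mat c c (\<lambda>(i,k). f i k))"
proof -
  define M where "M = mat c c (\<lambda>(k,i). f i k)"
  have Mc: "M \<in> carrier_mat c c" unfolding M_def by simp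
  have qc: "\<And>k. k < c \<Longrightarrow> q k < c" using permutes_in_image[OF q] by simp
  have "det (mat c c (\<lambda>(i,k). f i (q k))) = det (transpose_mat (mat c c (\<lambda>(i,k). f i (q k))))"
    using det_transpose[of "mat c c (\<lambda>(i,k). f i (q k))" c] by simp
  also have "transpose_mat (mat c c (\<lambda>(i,k). f i (q k))) = mat c c (\<lambda>(k,i). M $$ (q k, i))"
    by (rule eq_matI) (simp_all add: M_def qc)
  also have "det \<dots> = signof q * det M" by (rule det_permute_rows[OF Mc q])
  also have "det M = det (transpose_mat M)" using Mc by (simp add: det_transpose)
  also have "transpose_mat M = mat c c (\<lambda>(i,k). f i k)" unfolding M_def by (rule eq_matI) auto
  finally show ?thesis .
qed

lemma det_cols_reorder:
  assumes dx: "distinct xs" and dy: "distinct ys" and st: "set xs = set ys" and lx: "length xs = c"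
  shows "\<exists>\<epsilon>::real. \<epsilon> * \<epsilon> = 1 \<and>
    (\<forall>g. det (mat c c (\<lambda>(i,k). g i (ys ! k))) = \<epsilon> * det (mat c c (\<lambda>(i,k). g i (xs ! k))))"
proof -
  have ly: "length ys = c" using dx dy st lx by (metis distinct_card)
  define q where "q k = (if k < c then inv_into {0..<c} ((!) xs) (ys ! k) else k)" for k
  have im: "(!) xs ` {0..<c} = set xs" using lx by (auto simp: in_set_conv_nth)
  have qxs: "xs ! (q k) = ys ! k" if "k < c" for k
  proof -
    have "ys ! k \<in> (!) xs ` {0..<c}" using st ly that im by simp
    moreover have "q k = inv_into {0..<c} ((!) xs) (ys ! k)" using that q_def by simp
    ultimately show ?thesis using f_inv_into_f[of "ys ! k" "(!) xs" "{0..<c}"] by simp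
  qed
  have qc: "q k < c" if "k < c" for k
  proof -
    have "ys ! k \<in> (!) xs ` {0..<c}" using st ly that im by simp
    thus ?thesis unfolding q_def using that inv_into_into[of "ys ! k" "(!) xs" "{0..<c}"] by simp
  qed
  have q: "q permutes {0..<c}"
  proof (rule inj_imp_permutes)
    show "inj_on q {0..<c}"
    proof (rule inj_onI)
      fix a b assume ab: "a \<in> {0..<c}" "b \<in> {0..<c}" "q a = q b"
      hence "ys ! a = ys ! b" using qxs[of a] qxs[of b] by simp
      thus "a = b" using ab dy ly by (simp add: nth_eq_iff_index_eq)
    qed
    show "finite {0..<c}" by simp
    show "\<And>x. x \<in> {0..<c} \<Longrightarrow> q x \<in> {0..<c}" using qc by simp
    show "\<And>x. x \<notin> {0..<c} \<Longrightarrow> q x = x" unfolding q_def by simp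
  qed
  show ?thesis
  proof (intro exI[of _ "signof q"] conjI allI)
    show "signof q * signof q = (1::real)" by (rule signof_sq)
    fix g :: "nat \<Rightarrow> 'a \<Rightarrow> real"
    have "mat c c (\<lambda>(i,k). g i (ys ! k)) = mat c c (\<lambda>(i,k). (\<lambda>i k. g i (xs ! k)) i (q k))"
      by (rule eq_matI) (simp_all add: qxs)
    also have "det \<dots> = signof q * det (mat c c (\<lambda>(i,k). g i (xs ! k)))"
      using det_cols_perm[OF q, of "\<lambda>i k. g i (xs ! k)"] by simp
    finally show "det (mat c c (\<lambda>(i,k). g i (ys ! k))) = signof q * det (mat c c (\<lambda>(i,k). g i (xs ! k)))" .
  qed
qed

lemma det_scale:
  assumes M: "M \<in> carrier_mat c c"
  shows "det (mat c c (\<lambda>(i,k). (a i * b k) * M $$ (i,k))) = prod a {0..<c} * prod b {0..<c} * det M"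
proof -
  have Mc: "mat c c (\<lambda>(i,k). (a i * b k) * M $$ (i,k)) \<in> carrier_mat c c" by simp
  have "det (mat c c (\<lambda>(i,k). (a i * b k) * M $$ (i,k))) =
     (\<Sum>p\<in>{p. p permutes {0..<c}}. signof p * (\<Prod>i=0..<c. (a i * b (p i)) * M $$ (i, p i)))"
    unfolding det_def'[OF Mc]
  proof (rule sum.cong[OF refl])
    fix p assume p: "p \<in> {p. p permutes {0..<c}}"
    have "\<And>i. i < c \<Longrightarrow> p i < c" using p permutes_in_image[of p "{0..<c}"] by simp
    thus "signof p * (\<Prod>i=0..<c. mat c c (\<lambda>(i,k). (a i * b k) * M $$ (i,k)) $$ (i, p i)) =
      signof p * (\<Prod>i=0..<c. (a i * b (p i)) * M $$ (i, p i))" by simp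
  qed
  also have "\<dots> = (\<Sum>p\<in>{p. p permutes {0..<c}}. prod a {0..<c} * prod b {0..<c} * (signof p * (\<Prod>i=0..<c. M $$ (i, p i))))"
  proof (rule sum.cong[OF refl])
    fix p assume p: "p \<in> {p. p permutes {0..<c}}"
    have "(\<Prod>i=0..<c. b (p i)) = prod b {0..<c}"
      using prod.permute[of p "{0..<c}" b] p by (simp add: comp_def)
    thus "signof p * (\<Prod>i=0..<c. (a i * b (p i)) * M $$ (i, p i)) =
       prod a {0..<c} * prod b {0..<c} * (signof p * (\<Prod>i=0..<c. M $$ (i, p i)))"
      by (simp add: prod.distrib)
  qed
  also have "\<dots> = prod a {0..<c} * prod b {0..<c} * det M"
    unfolding det_def'[OF M] by (simp add: sum_distrib_left)
  finally show ?thesis .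
qed




lemma pick_in_lt: "finite K \<Longrightarrow> a < card K \<Longrightarrow> pick K a \<in> K"
  by (rule pick_in_set_le)

lemma pick_eq_iff: "a < card K \<Longrightarrow> b < card K \<Longrightarrow> pick K a = pick K b \<longleftrightarrow> a = b"
  using pick_inj_card by blast

lemma det_outflow_block:
  assumes I: "I \<subseteq> {0..<n}" and n: "n = s + card I"
  shows "\<exists>\<epsilon>::real. \<epsilon> * \<epsilon> = 1 \<and> (\<forall>g. det (mat n n (\<lambda>(i,k). if k < s then g i k else (if i = pick I (k - s) then 1 else 0)))
            = \<epsilon> * det (mat s s (\<lambda>(a,l). g (pick ({0..<n} - I) a) l)))"
proof -
  define J where "J = {0..<n} - I"
  define d where "d = card I"
  have finI: "finite I" using I finite_subset by blast
  have finJ: "finite J" unfolding J_def by simp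
  have cJ: "card J = s" unfolding J_def using I n finI by (simp add: card_Diff_subset)
  have pJ: "\<And>a. a < s \<Longrightarrow> pick J a \<in> J" using pick_in_lt[OF finJ] cJ by simp
  have pI: "\<And>b. b < d \<Longrightarrow> pick I b \<in> I" using pick_in_lt[OF finI] d_def by simp
  define p where "p a = (if a < s then pick J a else if a < n then pick I (a - s) else a)" for a
  have p: "p permutes {0..<n}"
  proof (rule inj_imp_permutes)
    show "inj_on p {0..<n}"
    proof (rule inj_onI)
      fix a b assume ab: "a \<in> {0..<n}" "b \<in> {0..<n}" "p a = p b"
      consider "a < s" "b < s" | "a < s" "\<not> b < s" | "\<not> a < s" "b < s" | "\<not> a < s" "\<not> b < s" by blast
      thus "a = b"
      proof cases
        case 1 thus ?thesis using ab pick_eq_iff[of a J b] cJ unfolding p_def by simp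
      next
        case 2
        hence "pick J a \<in> J" "pick I (b - s) \<in> I" using pJ pI ab n d_def by auto
        moreover have "pick J a = pick I (b - s)" using ab 2 unfolding p_def by simp
        ultimately show ?thesis unfolding J_def by auto
      next
        case 3
        hence "pick J b \<in> J" "pick I (a - s) \<in> I" using pJ pI ab n d_def by auto
        moreover have "pick J b = pick I (a - s)" using ab 3 unfolding p_def by simp
        ultimately show ?thesis unfolding J_def by auto
      next
        case 4
        hence "a - s < d" "b - s < d" using ab n d_def by auto
        moreover have "pick I (a - s) = pick I (b - s)" using ab 4 unfolding p_def by simp
        ultimately have "a - s = b - s" using pick_eq_iff[of "a - s" I "b - s"] d_def by simp
        thus ?thesis using 4 by simp
      qed
    qed
    show "finite {0..<n}" by simp
    show "\<And>x. x \<in> {0..<n} \<Longrightarrow> p x \<in> {0..<n}"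
    proof -
      fix x assume x: "x \<in> {0..<n}"
      show "p x \<in> {0..<n}"
      proof (cases "x < s")
        case True thus ?thesis using pJ[OF True] unfolding p_def J_def by simp
      next
        case False
        hence "x - s < d" using x n d_def by auto
        hence "pick I (x - s) \<in> I" using pI by simp
        hence "pick I (x - s) < n" using I by auto
        thus ?thesis using False x unfolding p_def by simp
      qed
    qed
    show "\<And>x. x \<notin> {0..<n} \<Longrightarrow> p x = x" unfolding p_def using n by simp
  qed
  show ?thesis
  proof (intro exI[of _ "signof p"] conjI allI)
    show "signof p * signof p = (1::real)" by (rule signof_sq)
    fix g :: "nat \<Rightarrow> nat \<Rightarrow> real"
    define Big where "Big = mat n n (\<lambda>(i,k). if k < s then g i k else (if i = pick I (k - s) then 1 else (0::real)))"
    define MJ where "MJ = mat s s (\<lambda>(a,l). g (pick J a) l)"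
    define MI where "MI = mat d s (\<lambda>(a,l). g (pick I a) l)"
    have Bigc: "Big \<in> carrier_mat n n" unfolding Big_def by simp
    have "mat n n (\<lambda>(i,k). Big $$ (p i, k)) = four_block_mat MJ (0\<^sub>m s d) MI (1\<^sub>m d)"
    proof (rule eq_matI)
      fix i k assume "i < dim_row (four_block_mat MJ (0\<^sub>m s d) MI (1\<^sub>m d))"
        "k < dim_col (four_block_mat MJ (0\<^sub>m s d) MI (1\<^sub>m d))"
      hence ik: "i < n" "k < n" using n d_def by (simp_all add: MJ_def MI_def)
      have pin: "p i < n" using p ik permutes_in_image[of p "{0..<n}" i] by simp
      have rhs: "four_block_mat MJ (0\<^sub>m s d) MI (1\<^sub>m d) $$ (i,k) =
        (if i < s then if k < s then MJ $$ (i,k) else 0 else if k < s then MI $$ (i - s, k) else (if i - s = k - s then 1 else 0))"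
        using ik n d_def by (simp add: MJ_def MI_def)
      show "mat n n (\<lambda>(i,k). Big $$ (p i, k)) $$ (i,k) = four_block_mat MJ (0\<^sub>m s d) MI (1\<^sub>m d) $$ (i,k)"
      proof (cases "i < s")
        case True
        have "pick J i \<notin> I" using pJ[OF True] unfolding J_def by auto
        moreover have "\<not> k < s \<Longrightarrow> pick I (k - s) \<in> I" using pI ik n d_def by simp
        ultimately have "\<not> k < s \<Longrightarrow> pick J i \<noteq> pick I (k - s)" by auto
        thus ?thesis using True ik pin unfolding rhs by (simp add: Big_def MJ_def p_def)
      next
        case False
        have isd: "i - s < d" using ik False n d_def by auto
        have ks: "\<not> k < s \<Longrightarrow> k - s < d" using ik n d_def by auto
        have "\<not> k < s \<Longrightarrow> pick I (i - s) = pick I (k - s) \<longleftrightarrow> i - s = k - s"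
          using pick_eq_iff[of "i - s" I "k - s"] isd ks d_def by simp
        thus ?thesis using False ik pin isd unfolding rhs by (simp add: Big_def MI_def p_def)
      qed
    qed (simp_all add: n d_def MJ_def MI_def)
    note eqFB = this
    have MJc: "MJ \<in> carrier_mat s s" unfolding MJ_def by (rule mat_carrier)
    have MIc: "MI \<in> carrier_mat d s" unfolding MI_def by (rule mat_carrier)
    have "det (mat n n (\<lambda>(i,k). Big $$ (p i, k))) = signof p * det Big" by (rule det_permute_rows[OF Bigc p])
    hence "det (four_block_mat MJ (0\<^sub>m s d) MI (1\<^sub>m d)) = signof p * det Big" by (simp only: eqFB)
    moreover have "det (four_block_mat MJ (0\<^sub>m s d) MI (1\<^sub>m d)) = det MJ * det (1\<^sub>m d :: real mat)"
      by (rule det_four_block_mat_upper_right_zero[OF MJc refl MIc one_carrier_mat])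
    ultimately have "signof p * det Big = det MJ" by simp
    have "det Big = (signof p * signof p) * det Big" using signof_sq[of p] by simp
    also have "\<dots> = signof p * (signof p * det Big)" by (rule mult.assoc)
    also have "\<dots> = signof p * det MJ" using \<open>signof p * det Big = det MJ\<close> by simp
    finally have "det Big = signof p * det MJ" .
    thus "det (mat n n (\<lambda>(i,k). if k < s then g i k else (if i = pick I (k - s) then 1 else 0)))
            = signof p * det (mat s s (\<lambda>(a,l). g (pick ({0..<n} - I) a) l))"
      unfolding Big_def MJ_def J_def .
  qed
qed



definition cm :: "nat \<Rightarrow> (nat \<Rightarrow> real) \<Rightarrow> cplx \<Rightarrow> real" where
  "cm n c y = (\<Prod>l<n. c l ^ y l)"

lemma deriv_sum_pow:
  assumes fin: "finite S"
  shows "((\<lambda>t. \<Sum>r\<in>S. C r * t ^ e r) has_real_derivative (\<Sum>r\<in>S. C r * (real (e r) * x ^ (e r - 1)))) (at x)"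
  by (rule DERIV_sum) (auto intro!: derivative_eq_intros)

lemma partial_ext:
  assumes c: "\<forall>i<n. c i > 0" and i: "i < n" and j: "j < n"
  shows "partial (\<lambda>x. ext_rate_fun n d \<omega> Rs \<kappa> x i) c j =
    (if i < d then \<omega> i j else
      (\<Sum>r\<in>Rs. \<kappa> r * (real (snd r i) - real (fst r i)) * (real (fst r j) * cm n c (fst r) / c j)))"
proof (cases "i < d")
  case True
  have eq: "(\<lambda>t. ext_rate_fun n d \<omega> Rs \<kappa> (c(j := t)) i) = (\<lambda>t. (\<Sum>l\<in>{..<n}-{j}. \<omega> i l * c l) + \<omega> i j * t)"
  proof
    fix t
    have "(\<Sum>l<n. \<omega> i l * (c(j := t)) l) = (\<Sum>l\<in>{..<n}-{j}. \<omega> i l * (c(j := t)) l) + \<omega> i j * (c(j := t)) j"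
      using j by (subst sum.remove[of _ j]) auto
    also have "(\<Sum>l\<in>{..<n}-{j}. \<omega> i l * (c(j := t)) l) = (\<Sum>l\<in>{..<n}-{j}. \<omega> i l * c l)"
      by (rule sum.cong) auto
    finally show "ext_rate_fun n d \<omega> Rs \<kappa> (c(j := t)) i = (\<Sum>l\<in>{..<n}-{j}. \<omega> i l * c l) + \<omega> i j * t"
      unfolding ext_rate_fun_def using True by simp
  qed
  have "((\<lambda>t. (\<Sum>l\<in>{..<n}-{j}. \<omega> i l * c l) + \<omega> i j * t) has_real_derivative \<omega> i j) (at (c j))"
    by (auto intro!: derivative_eq_intros)
  hence "deriv (\<lambda>t. ext_rate_fun n d \<omega> Rs \<kappa> (c(j := t)) i) (c j) = \<omega> i j"
    unfolding eq by (rule DERIV_imp_deriv)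
  thus ?thesis unfolding partial_def using True by simp
next
  case False
  define P0 where "P0 r = (\<Prod>l\<in>{..<n}-{j}. c l ^ fst r l)" for r :: rxn
  define C where "C r = \<kappa> r * P0 r * (real (snd r i) - real (fst r i))" for r
  have eq: "(\<lambda>t. ext_rate_fun n d \<omega> Rs \<kappa> (c(j := t)) i) = (\<lambda>t. \<Sum>r\<in>Rs. C r * t ^ fst r j)"
  proof
    fix t
    have pr: "(\<Prod>l<n. (c(j := t)) l ^ fst r l) = P0 r * t ^ fst r j" for r :: rxn
    proof -
      have "(\<Prod>l<n. (c(j := t)) l ^ fst r l) = (\<Prod>l\<in>{..<n}-{j}. (c(j := t)) l ^ fst r l) * (c(j := t)) j ^ fst r j"
        using j by (subst prod.remove[of _ j]) (auto simp: mult.commute)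
      also have "(\<Prod>l\<in>{..<n}-{j}. (c(j := t)) l ^ fst r l) = P0 r"
        unfolding P0_def by (rule prod.cong) auto
      finally show ?thesis by simp
    qed
    show "ext_rate_fun n d \<omega> Rs \<kappa> (c(j := t)) i = (\<Sum>r\<in>Rs. C r * t ^ fst r j)"
      unfolding ext_rate_fun_def rate_fun_def using False
      by (simp del: fun_upd_apply add: pr C_def mult_ac)
  qed
  show ?thesis
  proof (cases "finite Rs")
    case fin: True
    have "deriv (\<lambda>t. ext_rate_fun n d \<omega> Rs \<kappa> (c(j := t)) i) (c j) = (\<Sum>r\<in>Rs. C r * (real (fst r j) * c j ^ (fst r j - 1)))"
      unfolding eq by (rule DERIV_imp_deriv[OF deriv_sum_pow[OF fin]])
    also have "\<dots> = (\<Sum>r\<in>Rs. \<kappa> r * (real (snd r i) - real (fst r i)) * (real (fst r j) * cm n c (fst r) / c j))"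
    proof (rule sum.cong[OF refl])
      fix r assume "r \<in> Rs"
      have cj: "c j > 0" using c j by simp
      have cmr: "cm n c (fst r) = P0 r * c j ^ fst r j"
        unfolding cm_def P0_def using j by (subst prod.remove[of _ j]) (auto simp: mult.commute)
      have "real (fst r j) * c j ^ (fst r j - 1) = real (fst r j) * (c j ^ fst r j) / c j"
      proof (cases "fst r j")
        case (Suc k) thus ?thesis using cj by simp
      qed simp
      thus "C r * (real (fst r j) * c j ^ (fst r j - 1)) =
         \<kappa> r * (real (snd r i) - real (fst r i)) * (real (fst r j) * cm n c (fst r) / c j)"
        unfolding C_def cmr by simp
    qed
    finally show ?thesis unfolding partial_def using False by simp
  next
    case inf: False
    have "(\<lambda>t. ext_rate_fun n d \<omega> Rs \<kappa> (c(j := t)) i) = (\<lambda>t. 0)" unfolding eq using inf by simp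
    hence "deriv (\<lambda>t. ext_rate_fun n d \<omega> Rs \<kappa> (c(j := t)) i) (c j) = 0" by simp
    thus ?thesis unfolding partial_def using False inf by simp
  qed
qed


lemma enum_rxns_props:
  assumes "finite R"
  shows "distinct (enum_rxns R)" "set (enum_rxns R) = R" "length (enum_rxns R) = card R"
proof -
  have ex: "\<exists>xs. distinct xs \<and> set xs = R" using finite_distinct_list[OF assms] by blast
  have "distinct (enum_rxns R) \<and> set (enum_rxns R) = R"
    unfolding enum_rxns_def by (rule someI_ex[OF ex])
  thus "distinct (enum_rxns R)" "set (enum_rxns R) = R" by auto
  thus "length (enum_rxns R) = card R" using distinct_card by metis
qed

lemma sum_nth: "distinct xs \<Longrightarrow> sum g (set xs) = (\<Sum>k<length xs. g (xs ! k))"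
  using sum.reindex_bij_betw[OF bij_betw_nth[of xs "{..<length xs}" "set xs"], of g] by simp

lemma prod_nth: "distinct xs \<Longrightarrow> prod g (set xs) = (\<Prod>k<length xs. g (xs ! k))"
  using prod.reindex_bij_betw[OF bij_betw_nth[of xs "{..<length xs}" "set xs"], of g] by simp

lemma pick_bij: "finite K \<Longrightarrow> bij_betw (pick K) {0..<card K} K"
  unfolding bij_betw_def
proof
  show "inj_on (pick K) {0..<card K}" by (rule inj_onI) (use pick_inj_card in auto)
qed (rule pick_image)

lemma sum_pick: "finite K \<Longrightarrow> sum g K = (\<Sum>a<card K. g (pick K a))"
  using sum.reindex_bij_betw[OF pick_bij, of K g] by (simp add: atLeast0LessThan)

lemma prod_pick: "finite K \<Longrightarrow> prod g K = (\<Prod>a<card K. g (pick K a))"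
  using prod.reindex_bij_betw[OF pick_bij, of K g] by (simp add: atLeast0LessThan)

lemma submatrix_mat:
  assumes I: "I \<subseteq> {0..<r}" and J: "J \<subseteq> {0..<c}"
  shows "submatrix (mat r c f) I J = mat (card I) (card J) (\<lambda>(i,j). f (pick I i, pick J j))"
proof -
  have cI: "{i. i < r \<and> i \<in> I} = I" and cJ: "{j. j < c \<and> j \<in> J} = J" using I J by auto
  have fI: "finite I" "finite J" using I J finite_subset by blast+
  show ?thesis
  proof (rule eq_matI)
    fix i j assume ij: "i < dim_row (mat (card I) (card J) (\<lambda>(i,j). f (pick I i, pick J j)))"
      "j < dim_col (mat (card I) (card J) (\<lambda>(i,j). f (pick I i, pick J j)))"
    hence "pick I i \<in> I" "pick J j \<in> J" using pick_in_set_le by simp_all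
    hence "pick I i < r" "pick J j < c" using I J by auto
    thus "submatrix (mat r c f) I J $$ (i,j) = mat (card I) (card J) (\<lambda>(i,j). f (pick I i, pick J j)) $$ (i,j)"
      using ij by (simp add: submatrix_def cI cJ)
  qed (simp_all add: submatrix_def cI cJ)
qed

lemma del_rows_mat:
  assumes I: "I \<subseteq> {0..<r}"
  shows "del_rows (mat r c f) I = mat (r - card I) c (\<lambda>(i,j). f (pick ({0..<r} - I) i, j))"
proof -
  have fI: "finite I" using I finite_subset by blast
  have cJ: "card ({0..<r} - I) = r - card I" using I fI by (simp add: card_Diff_subset)
  have "del_rows (mat r c f) I = mat (card ({0..<r} - I)) (card {0..<c}) (\<lambda>(i,j). f (pick ({0..<r} - I) i, pick {0..<c} j))"
    unfolding del_rows_def by (simp add: submatrix_mat)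
  also have "\<dots> = mat (r - card I) c (\<lambda>(i,j). f (pick ({0..<r} - I) i, j))"
    by (rule eq_matI) (simp_all add: cJ pick_upt)
  finally show ?thesis .
qed

lemma det_zero_col:
  assumes A: "(A :: real mat) \<in> carrier_mat s s" and b: "b < s" and z: "\<And>a. a < s \<Longrightarrow> A $$ (a, b) = 0"
  shows "det A = 0"
  using laplace_expansion_column[OF A b] z by simp

lemma sum_split_add: "(\<Sum>k<d+(s::nat). f k) = (\<Sum>k<d. f k) + (\<Sum>q<s. f (d+q))"
  by (induction s) (simp_all add: add.assoc)




definition Vf :: "nat \<Rightarrow> (nat \<Rightarrow> nat \<Rightarrow> real) \<Rightarrow> nat \<Rightarrow> nat \<Rightarrow> real" where
  "Vf d \<omega> j l = (if j < d then - \<omega> j (d + l) else if j = d + l then 1 else 0)"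

definition gam :: "rxn \<Rightarrow> nat \<Rightarrow> real" where
  "gam r j = real (fst r j) - real (snd r j)"

lemma orth_outflow:
  assumes "i < n"
  shows "(\<Sum>j<n. \<omega> k j * (real (snd (outflow i) j) - real (fst (outflow i) j))) = - \<omega> k i"
proof -
  have "(\<Sum>j<n. \<omega> k j * (real (snd (outflow i) j) - real (fst (outflow i) j))) = (\<Sum>j<n. (if j = i then - \<omega> k j else 0))"
    by (rule sum.cong) (auto simp: outflow_def)
  also have "\<dots> = - \<omega> k i" using assms by (simp add: sum.delta)
  finally show ?thesis .
qed

lemma gam_V:
  assumes orth: "\<forall>i<d. \<forall>r\<in>Rs. (\<Sum>j<n. \<omega> i j * (real (snd r j) - real (fst r j))) = 0"
    and redf: "\<forall>i<d. \<omega> i i = 1 \<and> (\<forall>j<d. j \<noteq> i \<longrightarrow> \<omega> i j = 0)"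
    and n: "n = d + s" and r: "r \<in> Rs" and j: "j < n"
  shows "gam r j = (\<Sum>q<s. Vf d \<omega> j q * gam r (d+q))"
proof (cases "j < d")
  case False
  have "(\<Sum>q<s. Vf d \<omega> j q * gam r (d+q)) = (\<Sum>q<s. if q = j - d then gam r (d+q) else 0)"
    by (rule sum.cong) (use False in \<open>auto simp: Vf_def\<close>)
  also have "\<dots> = gam r j" using False j n by (simp add: sum.delta)
  finally show ?thesis by simp
next
  case True
  have "0 = (\<Sum>t<n. \<omega> j t * (real (snd r t) - real (fst r t)))" using orth True r by simp
  also have "\<dots> = (\<Sum>t<n. - (\<omega> j t * gam r t))" by (rule sum.cong) (auto simp: gam_def algebra_simps)
  also have "\<dots> = (\<Sum>t<d. - (\<omega> j t * gam r t)) + (\<Sum>q<s. - (\<omega> j (d+q) * gam r (d+q)))"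
    unfolding n by (rule sum_split_add)
  also have "(\<Sum>t<d. - (\<omega> j t * gam r t)) = (\<Sum>t<d. if t = j then - gam r t else 0)"
    by (rule sum.cong) (use redf True in auto)
  also have "\<dots> = - gam r j" using True by (simp add: sum.delta)
  finally have "gam r j = (\<Sum>q<s. - (\<omega> j (d+q) * gam r (d+q)))" by simp
  also have "\<dots> = (\<Sum>q<s. Vf d \<omega> j q * gam r (d+q))"
    by (rule sum.cong) (use True in \<open>auto simp: Vf_def\<close>)
  finally show ?thesis .
qed

lemma V_zero:
  assumes orth: "\<forall>i<d. \<forall>r\<in>Rs. (\<Sum>j<n. \<omega> i j * (real (snd r j) - real (fst r j))) = 0"
    and redf: "\<forall>i<d. \<omega> i i = 1 \<and> (\<forall>j<d. j \<noteq> i \<longrightarrow> \<omega> i j = 0)"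
    and n: "n = d + s" and J: "J \<subseteq> {0..<n}" and cJ: "card J = s"
    and i: "i < n" "i \<notin> J" and out: "outflow i \<in> Rs"
  shows "det (mat s s (\<lambda>(a,b). Vf d \<omega> (pick J a) b)) = 0"
proof -
  have wz: "\<omega> k i = 0" if "k < d" for k
    using orth that out orth_outflow[OF i(1), of \<omega> k] by auto
  have id: "\<not> i < d" using wz redf by auto
  have finJ: "finite J" using J finite_subset by blast
  show ?thesis
  proof (rule det_zero_col[of _ s "i - d"])
    show "i - d < s" using id i n by simp
    fix a assume a: "a < s"
    have pJ: "pick J a \<in> J" using pick_in_lt[OF finJ] a cJ by simp
    hence ne: "pick J a \<noteq> i" using i by auto
    have "Vf d \<omega> (pick J a) (i - d) = 0"
    proof (cases "pick J a < d")
      case True thus ?thesis using wz id unfolding Vf_def by simp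
    next
      case False thus ?thesis using ne id unfolding Vf_def by simp
    qed
    thus "mat s s (\<lambda>(a,b). Vf d \<omega> (pick J a) b) $$ (a, i - d) = 0" using a id i n by simp
  qed simp
qed



lemma mult_mat_entry:
  assumes "i < r" "j < c"
  shows "(mat r n f * mat n c g) $$ (i,j) = (\<Sum>k<n. f (i,k) * g (k,j))"
  using assms by (simp add: scalar_prod_def atLeast0LessThan row_def col_def)

lemma det_unit_upper:
  assumes U: "U \<in> carrier_mat n n" and ut: "\<And>i j. i < n \<Longrightarrow> j < i \<Longrightarrow> U $$ (i,j) = 0"
    and dg: "\<And>i. i < n \<Longrightarrow> U $$ (i,i) = (1::real)"
  shows "det U = 1"
proof -
  have "upper_triangular U" unfolding upper_triangular_def using U ut by auto
  hence "det U = prod_list (diag_mat U)" using det_upper_triangular U by blast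
  also have "diag_mat U = map (\<lambda>i. 1) [0..<n]" unfolding diag_mat_def using U dg by simp
  also have "\<dots> = replicate n 1" by (simp add: map_replicate_const)
  finally show ?thesis by simp
qed

lemma step_A:
  fixes Rs :: "rxn set" and \<kappa> :: "rxn \<Rightarrow> real"
  assumes c: "\<forall>i<n. c i > 0"
    and redf: "\<forall>i<d. \<omega> i i = 1 \<and> (\<forall>j<d. j \<noteq> i \<longrightarrow> \<omega> i j = 0)"
    and n: "n = d + s"
  defines "F \<equiv> \<lambda>i j. (\<Sum>r\<in>Rs. \<kappa> r * (real (snd r i) - real (fst r i)) * (real (fst r j) * cm n c (fst r) / c j))"
  shows "det (jacobian_mat n (ext_rate_fun n d \<omega> Rs \<kappa>) c) =
    det (mat s s (\<lambda>(a,l). \<Sum>k<n. F (d+a) k * Vf d \<omega> k l))"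
proof -
  define Jm where "Jm = mat n n (\<lambda>(i,j). if i < d then \<omega> i j else F i j)"
  define U where "U = mat n n (\<lambda>(k,j). if j < d then (if k = j then 1 else 0) else Vf d \<omega> k (j - d))"
  define BV where "BV = mat s s (\<lambda>(a,l). \<Sum>k<n. F (d+a) k * Vf d \<omega> k l)"
  define C where "C = mat s d (\<lambda>(a,j). F (d+a) j)"
  have JJ: "jacobian_mat n (ext_rate_fun n d \<omega> Rs \<kappa>) c = Jm"
    unfolding jacobian_mat_def Jm_def F_def
    by (rule eq_matI) (simp_all add: partial_ext[OF c])
  have Jmc: "Jm \<in> carrier_mat n n" and Uc: "U \<in> carrier_mat n n" unfolding Jm_def U_def by simp_all
  have detU: "det U = 1"
  proof (rule det_unit_upper[OF Uc])
    fix i j assume "i < n" "j < i"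
    thus "U $$ (i,j) = 0" unfolding U_def Vf_def by auto
  next
    fix i assume "i < n"
    thus "U $$ (i,i) = 1" unfolding U_def Vf_def by auto
  qed
  have prod: "Jm * U = four_block_mat (1\<^sub>m d) (0\<^sub>m d s) C BV"
  proof (rule eq_matI)
    fix i j assume "i < dim_row (four_block_mat (1\<^sub>m d) (0\<^sub>m d s) C BV)" "j < dim_col (four_block_mat (1\<^sub>m d) (0\<^sub>m d s) C BV)"
    hence ij: "i < n" "j < n" using n by (simp_all add: C_def BV_def)
    have e: "(Jm * U) $$ (i,j) = (\<Sum>k<n. (if i < d then \<omega> i k else F i k) *
        (if j < d then (if k = j then 1 else 0) else Vf d \<omega> k (j - d)))"
      unfolding Jm_def U_def by (simp add: mult_mat_entry[OF ij])
    have rhs: "four_block_mat (1\<^sub>m d) (0\<^sub>m d s) C BV $$ (i,j) =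
       (if i < d then if j < d then (if i = j then 1 else 0) else 0
        else if j < d then F i j else BV $$ (i - d, j - d))"
      using ij n by (simp add: C_def BV_def)
    show "(Jm * U) $$ (i,j) = four_block_mat (1\<^sub>m d) (0\<^sub>m d s) C BV $$ (i,j)"
    proof (cases "j < d")
      case True
      have "(Jm * U) $$ (i,j) = (\<Sum>k<n. if k = j then (if i < d then \<omega> i k else F i k) else 0)"
        unfolding e by (rule sum.cong) (use True in auto)
      also have "\<dots> = (if i < d then \<omega> i j else F i j)" using ij by (simp add: sum.delta)
      finally show ?thesis unfolding rhs using True redf by auto
    next
      case False
      have jd: "j - d < s" "d + (j - d) = j" using False ij n by auto
      show ?thesis
      proof (cases "i < d")
        case True
        have "(Jm * U) $$ (i,j) = (\<Sum>k<n. \<omega> i k * Vf d \<omega> k (j - d))"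
          unfolding e using True False by simp
        also have "\<dots> = (\<Sum>k<d. \<omega> i k * Vf d \<omega> k (j - d)) + (\<Sum>q<s. \<omega> i (d+q) * Vf d \<omega> (d+q) (j - d))"
          unfolding n by (rule sum_split_add)
        also have "(\<Sum>k<d. \<omega> i k * Vf d \<omega> k (j - d)) = (\<Sum>k<d. if k = i then - \<omega> i j else 0)"
          by (rule sum.cong) (use redf True jd in \<open>auto simp: Vf_def\<close>)
        also have "\<dots> = - \<omega> i j" using True by (simp add: sum.delta)
        also have "(\<Sum>q<s. \<omega> i (d+q) * Vf d \<omega> (d+q) (j - d)) = (\<Sum>q<s. if q = j - d then \<omega> i j else 0)"
          by (rule sum.cong) (use jd in \<open>auto simp: Vf_def\<close>)
        also have "\<dots> = \<omega> i j" using jd by (simp add: sum.delta)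
        finally show ?thesis unfolding rhs using True False by simp
      next
        case id: False
        have "(Jm * U) $$ (i,j) = (\<Sum>k<n. F i k * Vf d \<omega> k (j - d))"
          unfolding e using id False by simp
        also have "\<dots> = BV $$ (i - d, j - d)" unfolding BV_def using id ij jd n by simp
        finally show ?thesis unfolding rhs using id False by simp
      qed
    qed
  qed (simp_all add: n C_def BV_def Jm_def U_def)
  have "det Jm = det Jm * det U" using detU by simp
  also have "\<dots> = det (Jm * U)" by (rule det_mult[OF Jmc Uc, symmetric])
  also have "\<dots> = det (four_block_mat (1\<^sub>m d) (0\<^sub>m d s) C BV)" by (simp only: prod)
  also have "\<dots> = det (1\<^sub>m d :: real mat) * det BV"
    by (rule det_four_block_mat_upper_right_zero[OF one_carrier_mat refl]) (simp_all add: C_def BV_def)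
  also have "\<dots> = det BV" by simp
  finally show ?thesis unfolding JJ BV_def .
qed



definition hfun :: "nat \<Rightarrow> (nat \<Rightarrow> real) \<Rightarrow> rxn \<Rightarrow> nat \<Rightarrow> real" where
  "hfun n c r j = real (fst r j) * cm n c (fst r) / c j"

definition coefL :: "nat \<Rightarrow> nat \<Rightarrow> nat \<Rightarrow> (nat \<Rightarrow> nat \<Rightarrow> real) \<Rightarrow> (nat \<Rightarrow> real) \<Rightarrow> rxn list \<Rightarrow> real" where
  "coefL n d s \<omega> c xs = det (mat s s (\<lambda>(a,l). real (snd (xs!l) (d+a)) - real (fst (xs!l) (d+a)))) *
     (\<Sum>J\<in>{J. J \<subseteq> {0..<n} \<and> card J = s}. det (mat s s (\<lambda>(a,b). hfun n c (xs!a) (pick J b))) *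
        det (mat s s (\<lambda>(b,l). Vf d \<omega> (pick J b) l)))"

lemma pick_lt_bound: assumes "K \<subseteq> {0..<m}" "a < card K" shows "pick K a < m"
proof -
  have "finite K" using assms(1) finite_subset by blast
  hence "pick K a \<in> K" using pick_in_lt assms(2) by blast
  thus ?thesis using assms(1) by auto
qed

lemma image_nth_filter:
  assumes "R \<subseteq> set xs"
  shows "(!) xs ` {k. k < length xs \<and> xs ! k \<in> R} = R"
proof
  show "(!) xs ` {k. k < length xs \<and> xs ! k \<in> R} \<subseteq> R" by auto
  show "R \<subseteq> (!) xs ` {k. k < length xs \<and> xs ! k \<in> R}"
  proof
    fix x assume x: "x \<in> R"
    hence "x \<in> set xs" using assms by blast
    then obtain k where k: "k < length xs" "xs ! k = x" unfolding in_set_conv_nth by blast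
    show "x \<in> (!) xs ` {k. k < length xs \<and> xs ! k \<in> R}"
      by (rule image_eqI[of x _ k]) (use k x in auto)
  qed
qed

lemma step_BCD:
  fixes Rs :: "rxn set" and \<kappa> :: "rxn \<Rightarrow> real" and \<Phi> :: "rxn set \<Rightarrow> real"
  assumes fin: "finite Rs" and n: "n = d + s"
    and coef: "\<And>xs. distinct xs \<Longrightarrow> set xs \<subseteq> Rs \<Longrightarrow> length xs = s \<Longrightarrow> coefL n d s \<omega> c xs = \<Phi> (set xs)"
  defines "F \<equiv> \<lambda>i j. (\<Sum>r\<in>Rs. \<kappa> r * (real (snd r i) - real (fst r i)) * (real (fst r j) * cm n c (fst r) / c j))"
  shows "det (mat s s (\<lambda>(a,l). \<Sum>k<n. F (d+a) k * Vf d \<omega> k l)) =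
    (\<Sum>R\<in>{R. R \<subseteq> Rs \<and> card R = s}. \<Phi> R * (\<Prod>r\<in>R. \<kappa> r))"
proof -
  define rs where "rs = enum_rxns Rs"
  define m where "m = length rs"
  have drs: "distinct rs" and srs: "set rs = Rs" using enum_rxns_props[OF fin] unfolding rs_def by auto
  define GK where "GK = mat s m (\<lambda>(a,k). \<kappa> (rs!k) * (real (snd (rs!k) (d+a)) - real (fst (rs!k) (d+a))))"
  define HV where "HV = mat m s (\<lambda>(k,l). \<Sum>j<n. hfun n c (rs!k) j * Vf d \<omega> j l)"
  have BV: "mat s s (\<lambda>(a,l). \<Sum>k<n. F (d+a) k * Vf d \<omega> k l) = GK * HV"
  proof (rule eq_matI)
    fix a l assume al: "a < dim_row (GK * HV)" "l < dim_col (GK * HV)"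
    hence al: "a < s" "l < s" by (simp_all add: GK_def HV_def)
    have "(GK * HV) $$ (a,l) = (\<Sum>k<m. \<kappa> (rs!k) * (real (snd (rs!k) (d+a)) - real (fst (rs!k) (d+a))) *
        (\<Sum>j<n. hfun n c (rs!k) j * Vf d \<omega> j l))"
      unfolding GK_def HV_def by (simp add: mult_mat_entry[OF al])
    also have "\<dots> = (\<Sum>k<m. \<Sum>j<n. \<kappa> (rs!k) * (real (snd (rs!k) (d+a)) - real (fst (rs!k) (d+a))) *
        hfun n c (rs!k) j * Vf d \<omega> j l)"
      by (simp add: sum_distrib_left mult.assoc)
    also have "\<dots> = (\<Sum>j<n. \<Sum>k<m. \<kappa> (rs!k) * (real (snd (rs!k) (d+a)) - real (fst (rs!k) (d+a))) *
        hfun n c (rs!k) j * Vf d \<omega> j l)"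
      by (rule sum.swap)
    also have "\<dots> = (\<Sum>j<n. F (d+a) j * Vf d \<omega> j l)"
    proof (rule sum.cong[OF refl])
      fix j
      have "F (d+a) j = (\<Sum>k<m. \<kappa> (rs!k) * (real (snd (rs!k) (d+a)) - real (fst (rs!k) (d+a))) * hfun n c (rs!k) j)"
        unfolding F_def hfun_def m_def srs[symmetric] by (simp add: sum_nth[OF drs])
      thus "(\<Sum>k<m. \<kappa> (rs!k) * (real (snd (rs!k) (d+a)) - real (fst (rs!k) (d+a))) *
        hfun n c (rs!k) j * Vf d \<omega> j l) = F (d+a) j * Vf d \<omega> j l"
        by (simp add: sum_distrib_right)
    qed
    finally show "mat s s (\<lambda>(a,l). \<Sum>k<n. F (d+a) k * Vf d \<omega> k l) $$ (a,l) = (GK * HV) $$ (a,l)"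
      using al by simp
  qed (simp_all add: GK_def HV_def)
  define Ks where "Ks = {K. K \<subseteq> {0..<m} \<and> card K = s}"
  define xsK where "xsK K = map (\<lambda>a. rs ! pick K a) [0..<s]" for K
  have GKc: "GK \<in> carrier_mat s m" and HVc: "HV \<in> carrier_mat m s" unfolding GK_def HV_def by simp_all
  have "det (GK * HV) = (\<Sum>K\<in>Ks. det (submatrix GK {0..<s} K) * det (submatrix HV K {0..<s}))"
    unfolding Ks_def by (rule cauchy_binet[OF GKc HVc])
  also have "\<dots> = (\<Sum>K\<in>Ks. (\<Prod>r\<in>set (xsK K). \<kappa> r) * coefL n d s \<omega> c (xsK K))"
  proof (rule sum.cong[OF refl])
    fix K assume K: "K \<in> Ks"
    have Km: "K \<subseteq> {0..<m}" and cK: "card K = s" using K unfolding Ks_def by auto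
    have finK: "finite K" using Km finite_subset by blast
    have pK: "\<And>a. a < s \<Longrightarrow> pick K a < m" using pick_lt_bound[OF Km] cK by simp
    have lx: "length (xsK K) = s" unfolding xsK_def by simp
    have xn: "\<And>a. a < s \<Longrightarrow> xsK K ! a = rs ! pick K a" unfolding xsK_def by simp
    have dx: "distinct (xsK K)"
      unfolding xsK_def distinct_map
    proof
      show "distinct [0..<s]" by simp
      show "inj_on (\<lambda>a. rs ! pick K a) (set [0..<s])"
      proof (rule inj_onI)
        fix a b assume "a \<in> set [0..<s]" "b \<in> set [0..<s]" "rs ! pick K a = rs ! pick K b"
        hence ab: "a < s" "b < s" "rs ! pick K a = rs ! pick K b" by auto
        hence "pick K a = pick K b" using drs pK m_def by (simp add: nth_eq_iff_index_eq)
        thus "a = b" using pick_eq_iff[of a K b] ab cK by simp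
      qed
    qed
    define Gx where "Gx = mat s s (\<lambda>(a,l). real (snd (xsK K ! l) (d+a)) - real (fst (xsK K ! l) (d+a)))"
    have s1: "submatrix GK {0..<s} K = mat s s (\<lambda>(a,l). (1 * \<kappa> (xsK K ! l)) * Gx $$ (a,l))"
      unfolding GK_def using Km cK
      by (subst submatrix_mat) (auto intro!: eq_matI simp: pick_upt xn Gx_def)
    have d1: "det (submatrix GK {0..<s} K) = (\<Prod>l<s. \<kappa> (xsK K ! l)) * det Gx"
      unfolding s1 by (subst det_scale) (simp_all add: Gx_def atLeast0LessThan)
    have pk: "(\<Prod>l<s. \<kappa> (xsK K ! l)) = (\<Prod>r\<in>set (xsK K). \<kappa> r)"
      using prod_nth[OF dx, of \<kappa>] lx by simp
    define HK where "HK = mat s n (\<lambda>(a,j). hfun n c (xsK K ! a) j)"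
    define Vm where "Vm = mat n s (\<lambda>(j,l). Vf d \<omega> j l)"
    have s2: "submatrix HV K {0..<s} = HK * Vm"
    proof -
      have "submatrix HV K {0..<s} = mat s s (\<lambda>(a,l). \<Sum>j<n. hfun n c (rs ! pick K a) j * Vf d \<omega> j l)"
        unfolding HV_def using Km cK by (subst submatrix_mat) (auto intro!: eq_matI simp: pick_upt)
      also have "\<dots> = HK * Vm"
      proof (rule eq_matI)
        fix i j assume "i < dim_row (HK * Vm)" "j < dim_col (HK * Vm)"
        hence ij: "i < s" "j < s" by (simp_all add: HK_def Vm_def)
        have "(HK * Vm) $$ (i,j) = (\<Sum>k<n. hfun n c (xsK K ! i) k * Vf d \<omega> k j)"
          unfolding HK_def Vm_def using mult_mat_entry[OF ij, of n "\<lambda>(a,j). hfun n c (xsK K ! a) j" "\<lambda>(j,l). Vf d \<omega> j l"]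
          by simp
        thus "mat s s (\<lambda>(a,l). \<Sum>j<n. hfun n c (rs ! pick K a) j * Vf d \<omega> j l) $$ (i,j) = (HK * Vm) $$ (i,j)"
          using ij xn by simp
      qed (simp_all add: HK_def Vm_def)
      finally show ?thesis .
    qed
    have HKc: "HK \<in> carrier_mat s n" and Vmc: "Vm \<in> carrier_mat n s" unfolding HK_def Vm_def by simp_all
    have "det (HK * Vm) = (\<Sum>J\<in>{J. J \<subseteq> {0..<n} \<and> card J = s}. det (submatrix HK {0..<s} J) * det (submatrix Vm J {0..<s}))"
      by (rule cauchy_binet[OF HKc Vmc])
    also have "\<dots> = (\<Sum>J\<in>{J. J \<subseteq> {0..<n} \<and> card J = s}. det (mat s s (\<lambda>(a,b). hfun n c (xsK K ! a) (pick J b))) *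
        det (mat s s (\<lambda>(b,l). Vf d \<omega> (pick J b) l)))"
    proof (rule sum.cong[OF refl])
      fix J assume "J \<in> {J. J \<subseteq> {0..<n} \<and> card J = s}"
      hence J: "J \<subseteq> {0..<n}" "card J = s" by auto
      have "submatrix HK {0..<s} J = mat s s (\<lambda>(a,b). hfun n c (xsK K ! a) (pick J b))"
        unfolding HK_def using J by (subst submatrix_mat) (auto intro!: eq_matI simp: pick_upt)
      moreover have "submatrix Vm J {0..<s} = mat s s (\<lambda>(b,l). Vf d \<omega> (pick J b) l)"
        unfolding Vm_def using J by (subst submatrix_mat) (auto intro!: eq_matI simp: pick_upt)
      ultimately show "det (submatrix HK {0..<s} J) * det (submatrix Vm J {0..<s}) =
        det (mat s s (\<lambda>(a,b). hfun n c (xsK K ! a) (pick J b))) * det (mat s s (\<lambda>(b,l). Vf d \<omega> (pick J b) l))"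
        by simp
    qed
    finally have d2: "det (submatrix HV K {0..<s}) = (\<Sum>J\<in>{J. J \<subseteq> {0..<n} \<and> card J = s}.
        det (mat s s (\<lambda>(a,b). hfun n c (xsK K ! a) (pick J b))) * det (mat s s (\<lambda>(b,l). Vf d \<omega> (pick J b) l)))"
      unfolding s2 .
    show "det (submatrix GK {0..<s} K) * det (submatrix HV K {0..<s}) =
        (\<Prod>r\<in>set (xsK K). \<kappa> r) * coefL n d s \<omega> c (xsK K)"
      unfolding d1 d2 pk coefL_def Gx_def by (simp add: mult.assoc)
  qed
  also have "\<dots> = (\<Sum>K\<in>Ks. \<Phi> ((!) rs ` K) * (\<Prod>r\<in>(!) rs ` K. \<kappa> r))"
  proof (rule sum.cong[OF refl])
    fix K assume K: "K \<in> Ks"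
    have Km: "K \<subseteq> {0..<m}" and cK: "card K = s" using K unfolding Ks_def by auto
    have finK: "finite K" using Km finite_subset by blast
    have pK: "\<And>a. a < s \<Longrightarrow> pick K a < m" using pick_lt_bound[OF Km] cK by simp
    have sx: "set (xsK K) = (!) rs ` K"
    proof -
      have "set (xsK K) = (!) rs ` (pick K ` {0..<s})" unfolding xsK_def by auto
      also have "pick K ` {0..<s} = K" using pick_image[OF finK] cK by simp
      finally show ?thesis .
    qed
    have dx: "distinct (xsK K)"
      unfolding xsK_def distinct_map
    proof
      show "distinct [0..<s]" by simp
      show "inj_on (\<lambda>a. rs ! pick K a) (set [0..<s])"
      proof (rule inj_onI)
        fix a b assume "a \<in> set [0..<s]" "b \<in> set [0..<s]" "rs ! pick K a = rs ! pick K b"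
        hence ab: "a < s" "b < s" "rs ! pick K a = rs ! pick K b" by auto
        hence "pick K a = pick K b" using drs pK m_def by (simp add: nth_eq_iff_index_eq)
        thus "a = b" using pick_eq_iff[of a K b] ab cK by simp
      qed
    qed
    have "set (xsK K) \<subseteq> Rs" unfolding sx srs[symmetric] using Km m_def by auto
    moreover have "length (xsK K) = s" unfolding xsK_def by simp
    ultimately have "coefL n d s \<omega> c (xsK K) = \<Phi> (set (xsK K))" using coef dx by blast
    thus "(\<Prod>r\<in>set (xsK K). \<kappa> r) * coefL n d s \<omega> c (xsK K) = \<Phi> ((!) rs ` K) * (\<Prod>r\<in>(!) rs ` K. \<kappa> r)"
      unfolding sx by simp
  qed
  also have "\<dots> = (\<Sum>R\<in>{R. R \<subseteq> Rs \<and> card R = s}. \<Phi> R * (\<Prod>r\<in>R. \<kappa> r))"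
  proof (rule sum.reindex_bij_betw)
    have injrs: "inj_on ((!) rs) {0..<m}" using drs m_def by (simp add: inj_on_def nth_eq_iff_index_eq)
    show "bij_betw (\<lambda>K. (!) rs ` K) Ks {R. R \<subseteq> Rs \<and> card R = s}"
    proof (rule bij_betw_byWitness[where f'="\<lambda>R. {k. k < m \<and> rs ! k \<in> R}"])
      show "\<forall>K\<in>Ks. {k. k < m \<and> rs ! k \<in> (!) rs ` K} = K"
      proof
        fix K assume "K \<in> Ks"
        hence Km: "K \<subseteq> {0..<m}" unfolding Ks_def by auto
        show "{k. k < m \<and> rs ! k \<in> (!) rs ` K} = K"
          using Km injrs by (auto simp: inj_on_def) (metis atLeastLessThan_iff subsetD zero_le)
      qed
      show "\<forall>R\<in>{R. R \<subseteq> Rs \<and> card R = s}. (!) rs ` {k. k < m \<and> rs ! k \<in> R} = R"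
      proof
        fix R assume "R \<in> {R. R \<subseteq> Rs \<and> card R = s}"
        hence "R \<subseteq> set rs" using srs by auto
        thus "(!) rs ` {k. k < m \<and> rs ! k \<in> R} = R" unfolding m_def by (rule image_nth_filter)
      qed
      show "(\<lambda>K. (!) rs ` K) ` Ks \<subseteq> {R. R \<subseteq> Rs \<and> card R = s}"
      proof
        fix R assume "R \<in> (\<lambda>K. (!) rs ` K) ` Ks"
        then obtain K where K: "K \<in> Ks" "R = (!) rs ` K" by auto
        hence Km: "K \<subseteq> {0..<m}" "card K = s" unfolding Ks_def by auto
        have "card R = s" using K Km card_image[OF inj_on_subset[OF injrs Km(1)]] by simp
        moreover have "R \<subseteq> Rs" using K Km srs m_def by auto
        ultimately show "R \<in> {R. R \<subseteq> Rs \<and> card R = s}" by simp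
      qed
      show "(\<lambda>R. {k. k < m \<and> rs ! k \<in> R}) ` {R. R \<subseteq> Rs \<and> card R = s} \<subseteq> Ks"
      proof
        fix K assume "K \<in> (\<lambda>R. {k. k < m \<and> rs ! k \<in> R}) ` {R. R \<subseteq> Rs \<and> card R = s}"
        then obtain R where R: "R \<subseteq> Rs" "card R = s" "K = {k. k < m \<and> rs ! k \<in> R}" by auto
        have "(!) rs ` K = R" using R srs image_nth_filter[of R rs] unfolding m_def by simp
        moreover have "K \<subseteq> {0..<m}" using R by auto
        ultimately have "card K = s" using R card_image[OF inj_on_subset[OF injrs]] by metis
        thus "K \<in> Ks" unfolding Ks_def using R by auto
      qed
    qed
  qed
  finally show ?thesis unfolding BV .
qed




lemma cpow_expand:
  assumes c: "\<forall>i<n. c i > 0"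
  shows "cpow n c (\<lambda>j. -1 + (\<Sum>r\<in>R. int (fst r j))) = (\<Prod>j<n. inverse (c j)) * (\<Prod>r\<in>R. cm n c (fst r))"
proof -
  have "cpow n c (\<lambda>j. -1 + (\<Sum>r\<in>R. int (fst r j))) = (\<Prod>j<n. inverse (c j) * (\<Prod>r\<in>R. c j ^ fst r j))"
    unfolding cpow_def
  proof (rule prod.cong[OF refl])
    fix j assume "j \<in> {..<n}"
    hence cj: "c j \<noteq> 0" using c by auto
    have "c j powi (-1 + (\<Sum>r\<in>R. int (fst r j))) = c j powi (-1) * c j powi (\<Sum>r\<in>R. int (fst r j))"
      using cj by (rule power_int_add[OF disjI1])
    also have "c j powi (\<Sum>r\<in>R. int (fst r j)) = (\<Prod>r\<in>R. c j ^ fst r j)"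
    proof -
      have "(\<Sum>r\<in>R. int (fst r j)) = int (\<Sum>r\<in>R. fst r j)" by simp
      hence "c j powi (\<Sum>r\<in>R. int (fst r j)) = c j ^ (\<Sum>r\<in>R. fst r j)" by (simp only: power_int_of_nat)
      thus ?thesis by (simp only: power_sum)
    qed
    finally show "c j powi (-1 + (\<Sum>r\<in>R. int (fst r j))) = inverse (c j) * (\<Prod>r\<in>R. c j ^ fst r j)"
      by (simp add: power_int_minus)
  qed
  also have "\<dots> = (\<Prod>j<n. inverse (c j)) * (\<Prod>j<n. \<Prod>r\<in>R. c j ^ fst r j)" by (rule prod.distrib)
  also have "(\<Prod>j<n. \<Prod>r\<in>R. c j ^ fst r j) = (\<Prod>r\<in>R. cm n c (fst r))"
    unfolding cm_def by (rule prod.swap)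
  finally show ?thesis .
qed

lemma prod_compl_inv:
  fixes n :: nat
  assumes c: "\<forall>i<n. c i > (0::real)" and I: "I \<subseteq> {0..<n}"
  shows "(\<Prod>j<n. inverse (c j)) * (\<Prod>i\<in>I. c i) = (\<Prod>j\<in>{0..<n}-I. inverse (c j))"
proof -
  have e1: "(\<Prod>j<n. inverse (c j)) = (\<Prod>j\<in>{0..<n}. inverse (c j))" by (simp add: atLeast0LessThan)
  have e2: "(\<Prod>j\<in>{0..<n}. inverse (c j)) = (\<Prod>j\<in>{0..<n}-I. inverse (c j)) * (\<Prod>j\<in>I. inverse (c j))"
    by (rule prod.subset_diff[OF I finite_atLeastLessThan])
  have e3: "(\<Prod>j\<in>I. inverse (c j)) * (\<Prod>i\<in>I. c i) = 1"
  proof -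
    have "(\<Prod>j\<in>I. inverse (c j)) * (\<Prod>i\<in>I. c i) = (\<Prod>j\<in>I. inverse (c j) * c j)" by (rule prod.distrib[symmetric])
    also have "\<dots> = (\<Prod>j\<in>I. 1)"
    proof (rule prod.cong[OF refl])
      fix j assume "j \<in> I"
      hence "c j > 0" using c I by auto
      thus "inverse (c j) * c j = 1" by simp
    qed
    finally show ?thesis by simp
  qed
  have "(\<Prod>j<n. inverse (c j)) * (\<Prod>i\<in>I. c i) =
     (\<Prod>j\<in>{0..<n}-I. inverse (c j)) * ((\<Prod>j\<in>I. inverse (c j)) * (\<Prod>i\<in>I. c i))"
    unfolding e1 e2 by (rule mult.assoc)
  also have "\<dots> = (\<Prod>j\<in>{0..<n}-I. inverse (c j))" unfolding e3 by simp
  finally show ?thesis .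
qed

lemma del_rows_YG:
  assumes fR: "finite R" and cR: "card R = s" and I: "I \<subseteq> {0..<n}" and cI: "card I = d" and n: "n = d + s"
  shows "del_rows (Ymat n R) I = mat s s (\<lambda>(b,a). real (fst (enum_rxns R ! a) (pick ({0..<n}-I) b)))"
    "del_rows (Gmat n R) I = mat s s (\<lambda>(b,a). gam (enum_rxns R ! a) (pick ({0..<n}-I) b))"
proof -
  have l: "length (enum_rxns R) = s" using enum_rxns_props(3)[OF fR] cR by simp
  have ns: "n - card I = s" using n cI by simp
  show "del_rows (Ymat n R) I = mat s s (\<lambda>(b,a). real (fst (enum_rxns R ! a) (pick ({0..<n}-I) b)))"
    unfolding Ymat_def Let_def l by (simp add: del_rows_mat[OF I] ns)
  show "del_rows (Gmat n R) I = mat s s (\<lambda>(b,a). gam (enum_rxns R ! a) (pick ({0..<n}-I) b))"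
    unfolding Gmat_def Let_def l by (simp add: del_rows_mat[OF I] ns gam_def)
qed

lemma reorder_prod:
  fixes f g :: "nat \<Rightarrow> 'a \<Rightarrow> real"
  assumes dx: "distinct xs" "distinct ys" "set xs = set ys" "length xs = s"
  shows "det (mat s s (\<lambda>(b,a). f b (ys ! a))) * det (mat s s (\<lambda>(b,a). g b (ys ! a))) =
         det (mat s s (\<lambda>(b,a). f b (xs ! a))) * det (mat s s (\<lambda>(b,a). g b (xs ! a)))"
proof -
  obtain \<epsilon> :: real where e: "\<epsilon> * \<epsilon> = 1"
    and h: "\<And>g. det (mat s s (\<lambda>(i,k). g i (ys ! k))) = \<epsilon> * det (mat s s (\<lambda>(i,k). g i (xs ! k)))"
    using det_cols_reorder[OF assms] by blast
  have "det (mat s s (\<lambda>(b,a). f b (ys ! a))) * det (mat s s (\<lambda>(b,a). g b (ys ! a))) =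
     (\<epsilon> * \<epsilon>) * (det (mat s s (\<lambda>(b,a). f b (xs ! a))) * det (mat s s (\<lambda>(b,a). g b (xs ! a))))"
    unfolding h[of f] h[of g] by (simp add: ac_simps)
  thus ?thesis using e by simp
qed



lemma step_E:
  fixes Rs :: "rxn set"
  assumes c: "\<forall>i<n. c i > 0"
    and orth: "\<forall>i<d. \<forall>r\<in>Rs. (\<Sum>j<n. \<omega> i j * (real (snd r j) - real (fst r j))) = 0"
    and redf: "\<forall>i<d. \<omega> i i = 1 \<and> (\<forall>j<d. j \<noteq> i \<longrightarrow> \<omega> i j = 0)"
    and n: "n = d + s"
    and dx: "distinct xs" and sx: "set xs \<subseteq> Rs" and lx: "length xs = s"
  shows "coefL n d s \<omega> c xs = (-1)^s * cpow n c (\<lambda>j. -1 + (\<Sum>r\<in>set xs. int (fst r j))) *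
     (\<Sum>I\<in>Od n Rs d. det (del_rows (Ymat n (set xs)) I) * det (del_rows (Gmat n (set xs)) I) * (\<Prod>i\<in>I. c i))"
proof -
  define Js where "Js = {J. J \<subseteq> {0..<n} \<and> card J = s}"
  define YJ where "YJ J = mat s s (\<lambda>(b,a). real (fst (xs!a) (pick J b)))" for J
  define GJ where "GJ J = mat s s (\<lambda>(b,a). gam (xs!a) (pick J b))" for J
  define VJ where "VJ J = mat s s (\<lambda>(b,l). Vf d \<omega> (pick J b) l)" for J
  define G0 where "G0 = mat s s (\<lambda>(a,l). gam (xs!l) (d+a))"
  define P1 where "P1 J = (\<Prod>j\<in>J. inverse (c j))" for J
  define P2 where "P2 = (\<Prod>r\<in>set xs. cm n c (fst r))"
  have G0c: "G0 \<in> carrier_mat s s" unfolding G0_def by simp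
  have xR: "\<And>a. a < s \<Longrightarrow> xs ! a \<in> Rs" using sx lx by auto
  have d1: "det (mat s s (\<lambda>(a,l). real (snd (xs!l) (d+a)) - real (fst (xs!l) (d+a)))) = (-1)^s * det G0"
  proof -
    have "mat s s (\<lambda>(a,l). real (snd (xs!l) (d+a)) - real (fst (xs!l) (d+a))) =
      mat s s (\<lambda>(a,l). ((\<lambda>_. -1) a * (\<lambda>_. 1) l) * G0 $$ (a,l))"
      by (rule eq_matI) (simp_all add: G0_def gam_def)
    hence "det (mat s s (\<lambda>(a,l). real (snd (xs!l) (d+a)) - real (fst (xs!l) (d+a)))) =
       prod (\<lambda>_. -1) {0..<s} * prod (\<lambda>_. 1) {0..<s} * det G0"
      using det_scale[OF G0c, of "\<lambda>_. -1" "\<lambda>_. 1"] by simp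
    thus ?thesis by simp
  qed
  have d2: "det (GJ J) = det (VJ J) * det G0" if J: "J \<in> Js" for J
  proof -
    have Jn: "J \<subseteq> {0..<n}" and cJ: "card J = s" using J unfolding Js_def by auto
    have pJ: "\<And>b. b < s \<Longrightarrow> pick J b < n" using pick_lt_bound[OF Jn] cJ by simp
    have "GJ J = VJ J * G0"
    proof (rule eq_matI)
      fix b a assume "b < dim_row (VJ J * G0)" "a < dim_col (VJ J * G0)"
      hence ba: "b < s" "a < s" by (simp_all add: VJ_def G0_def)
      have "(VJ J * G0) $$ (b,a) = (\<Sum>q<s. Vf d \<omega> (pick J b) q * gam (xs!a) (d+q))"
        unfolding VJ_def G0_def using mult_mat_entry[OF ba, of s "\<lambda>(b,l). Vf d \<omega> (pick J b) l" "\<lambda>(a,l). gam (xs!l) (d+a)"]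
        by simp
      also have "\<dots> = gam (xs!a) (pick J b)"
        using gam_V[OF orth redf n xR[OF ba(2)] pJ[OF ba(1)]] by simp
      finally show "GJ J $$ (b,a) = (VJ J * G0) $$ (b,a)" using ba unfolding GJ_def by simp
    qed (simp_all add: GJ_def VJ_def G0_def)
    moreover have "VJ J \<in> carrier_mat s s" unfolding VJ_def by simp
    ultimately show ?thesis using det_mult G0c by metis
  qed
  have d3: "det (mat s s (\<lambda>(a,b). hfun n c (xs!a) (pick J b))) = P1 J * P2 * det (YJ J)" if J: "J \<in> Js" for J
  proof -
    have Jn: "J \<subseteq> {0..<n}" and cJ: "card J = s" using J unfolding Js_def by auto
    have finJ: "finite J" using Jn finite_subset by blast
    have YJc: "YJ J \<in> carrier_mat s s" unfolding YJ_def by simp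
    have "det (mat s s (\<lambda>(a,b). hfun n c (xs!a) (pick J b))) =
          det (transpose_mat (mat s s (\<lambda>(a,b). hfun n c (xs!a) (pick J b))))"
      using det_transpose[of "mat s s (\<lambda>(a,b). hfun n c (xs!a) (pick J b))" s] by simp
    also have "transpose_mat (mat s s (\<lambda>(a,b). hfun n c (xs!a) (pick J b))) =
        mat s s (\<lambda>(b,a). ((\<lambda>b. inverse (c (pick J b))) b * (\<lambda>a. cm n c (fst (xs!a))) a) * YJ J $$ (b,a))"
      by (rule eq_matI) (simp_all add: YJ_def hfun_def divide_inverse)
    also have "det \<dots> = prod (\<lambda>b. inverse (c (pick J b))) {0..<s} * prod (\<lambda>a. cm n c (fst (xs!a))) {0..<s} * det (YJ J)"
      by (rule det_scale[OF YJc])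
    also have "prod (\<lambda>b. inverse (c (pick J b))) {0..<s} = P1 J"
      unfolding P1_def using prod_pick[OF finJ, of "\<lambda>j. inverse (c j)"] cJ by (simp add: atLeast0LessThan)
    also have "prod (\<lambda>a. cm n c (fst (xs!a))) {0..<s} = P2"
      unfolding P2_def using prod_nth[OF dx, of "\<lambda>r. cm n c (fst r)"] lx by (simp add: atLeast0LessThan)
    finally show ?thesis .
  qed
  have L: "coefL n d s \<omega> c xs = (-1)^s * (\<Sum>J\<in>Js. P1 J * P2 * (det (YJ J) * det (GJ J)))"
  proof -
    have "coefL n d s \<omega> c xs = (-1)^s * det G0 * (\<Sum>J\<in>Js. (P1 J * P2 * det (YJ J)) * det (VJ J))"
      unfolding coefL_def d1 Js_def[symmetric] VJ_def[symmetric]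
      by (simp add: d3 cong: sum.cong)
    also have "\<dots> = (-1)^s * (\<Sum>J\<in>Js. P1 J * P2 * (det (YJ J) * det (GJ J)))"
      by (simp add: sum_distrib_left d2 ac_simps cong: sum.cong)
    finally show ?thesis .
  qed
  define T where "T J = P1 J * P2 * (det (YJ J) * det (GJ J))" for J
  have Oset_sub: "Oset n Rs \<subseteq> {0..<n}" unfolding Oset_def by auto
  have "(\<Sum>J\<in>Js. T J) = (\<Sum>J\<in>(\<lambda>I. {0..<n} - I) ` Od n Rs d. T J)"
  proof (rule sum.mono_neutral_right)
    show "finite Js" unfolding Js_def by (rule finite_subset[of _ "Pow {0..<n}"]) auto
    show "(\<lambda>I. {0..<n} - I) ` Od n Rs d \<subseteq> Js"
    proof
      fix J assume "J \<in> (\<lambda>I. {0..<n} - I) ` Od n Rs d"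
      then obtain I where I: "I \<subseteq> Oset n Rs" "card I = d" "J = {0..<n} - I" unfolding Od_def by auto
      have "I \<subseteq> {0..<n}" using I Oset_sub by auto
      hence "card J = s" using I n by (simp add: card_Diff_subset finite_subset)
      thus "J \<in> Js" unfolding Js_def using I by auto
    qed
    show "\<forall>J\<in>Js - (\<lambda>I. {0..<n} - I) ` Od n Rs d. T J = 0"
    proof
      fix J assume J: "J \<in> Js - (\<lambda>I. {0..<n} - I) ` Od n Rs d"
      hence Jn: "J \<subseteq> {0..<n}" and cJ: "card J = s" unfolding Js_def by auto
      have "\<not> ({0..<n} - J \<subseteq> Oset n Rs)"
      proof
        assume sub: "{0..<n} - J \<subseteq> Oset n Rs"
        have "card ({0..<n} - J) = d" using Jn cJ n by (simp add: card_Diff_subset finite_subset)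
        hence "{0..<n} - J \<in> Od n Rs d" unfolding Od_def using sub by auto
        moreover have "J = {0..<n} - ({0..<n} - J)" using Jn by auto
        ultimately show False using J by blast
      qed
      then obtain i where i: "i < n" "i \<notin> J" "outflow i \<in> Rs" unfolding Oset_def by auto
      have "det (VJ J) = 0" unfolding VJ_def by (rule V_zero[OF orth redf n Jn cJ i])
      hence "det (GJ J) = 0" using d2 J by simp
      thus "T J = 0" unfolding T_def by simp
    qed
  qed
  also have "\<dots> = sum (T \<circ> (\<lambda>I. {0..<n} - I)) (Od n Rs d)"
  proof (rule sum.reindex)
    show "inj_on (\<lambda>I. {0..<n} - I) (Od n Rs d)"
    proof (rule inj_onI)
      fix I I' assume "I \<in> Od n Rs d" "I' \<in> Od n Rs d" "{0..<n} - I = {0..<n} - I'"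
      moreover have "I \<subseteq> {0..<n}" "I' \<subseteq> {0..<n}" using calculation Oset_sub unfolding Od_def by auto
      ultimately show "I = I'" by blast
    qed
  qed
  also have "\<dots> = (\<Sum>I\<in>Od n Rs d. T ({0..<n} - I))" by (simp add: o_def)
  finally have sumT: "(\<Sum>J\<in>Js. T J) = (\<Sum>I\<in>Od n Rs d. T ({0..<n} - I))" .
  have "(-1)^s * cpow n c (\<lambda>j. -1 + (\<Sum>r\<in>set xs. int (fst r j))) *
     (\<Sum>I\<in>Od n Rs d. det (del_rows (Ymat n (set xs)) I) * det (del_rows (Gmat n (set xs)) I) * (\<Prod>i\<in>I. c i))
     = (-1)^s * (\<Sum>I\<in>Od n Rs d. T ({0..<n} - I))"
  proof -
    have "cpow n c (\<lambda>j. -1 + (\<Sum>r\<in>set xs. int (fst r j))) *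
     (\<Sum>I\<in>Od n Rs d. det (del_rows (Ymat n (set xs)) I) * det (del_rows (Gmat n (set xs)) I) * (\<Prod>i\<in>I. c i))
      = (\<Sum>I\<in>Od n Rs d. T ({0..<n} - I))"
      unfolding sum_distrib_left
    proof (rule sum.cong[OF refl])
      fix I assume I: "I \<in> Od n Rs d"
      have In: "I \<subseteq> {0..<n}" and cI: "card I = d" using I Oset_sub unfolding Od_def by auto
      define J where "J = {0..<n} - I"
      have cx: "card (set xs) = s" using dx lx distinct_card by metis
      define ys where "ys = enum_rxns (set xs)"
      have ys: "distinct ys" "set ys = set xs" unfolding ys_def using enum_rxns_props by auto
      have dY: "del_rows (Ymat n (set xs)) I = mat s s (\<lambda>(b,a). real (fst (ys ! a) (pick J b)))"
        and dG: "del_rows (Gmat n (set xs)) I = mat s s (\<lambda>(b,a). gam (ys ! a) (pick J b))"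
        using del_rows_YG[OF finite_set cx In cI n] unfolding J_def ys_def by auto
      have DD: "det (del_rows (Ymat n (set xs)) I) * det (del_rows (Gmat n (set xs)) I) = det (YJ J) * det (GJ J)"
        unfolding dY dG YJ_def GJ_def
        using reorder_prod[OF dx ys(1) ys(2)[symmetric] lx, of "\<lambda>b r. real (fst r (pick J b))" "\<lambda>b r. gam r (pick J b)"]
        by simp
      have "cpow n c (\<lambda>j. -1 + (\<Sum>r\<in>set xs. int (fst r j))) * (\<Prod>i\<in>I. c i) = P1 J * P2"
      proof -
        have "cpow n c (\<lambda>j. -1 + (\<Sum>r\<in>set xs. int (fst r j))) * (\<Prod>i\<in>I. c i) =
            ((\<Prod>j<n. inverse (c j)) * (\<Prod>i\<in>I. c i)) * P2"
          unfolding cpow_expand[OF c] P2_def by (simp add: ac_simps)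
        also have "(\<Prod>j<n. inverse (c j)) * (\<Prod>i\<in>I. c i) = P1 J"
          unfolding P1_def J_def by (rule prod_compl_inv[OF c In])
        finally show ?thesis .
      qed
      thus "cpow n c (\<lambda>j. -1 + (\<Sum>r\<in>set xs. int (fst r j))) *
         (det (del_rows (Ymat n (set xs)) I) * det (del_rows (Gmat n (set xs)) I) * (\<Prod>i\<in>I. c i)) =
         T ({0..<n} - I)"
        unfolding T_def J_def[symmetric] DD[symmetric] by (simp add: ac_simps)
    qed
    thus ?thesis by (simp add: mult.assoc)
  qed
  thus ?thesis unfolding L T_def[symmetric] sumT by simp
qed



lemma outflow_inj: "outflow i = outflow j \<Longrightarrow> i = j"
  unfolding outflow_def by (metis (mono_tags, lifting) fst_conv one_neq_zero)

lemma fst_outflow: "fst (outflow j) i = (if i = j then 1 else 0)" and snd_outflow: "snd (outflow j) i = 0"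
  unfolding outflow_def by simp_all

lemma sigma_block:
  assumes fin: "finite Rs" and R: "R \<subseteq> Rs" and cR: "card R = s" and n: "n = d + s"
    and I: "I \<in> Od n Rs d"
  shows "sigma n (R \<union> outflow ` I) = (-1)^n * (det (del_rows (Ymat n R) I) * det (del_rows (Gmat n R) I))"
proof -
  have IO: "I \<subseteq> Oset n Rs" and cI: "card I = d" using I unfolding Od_def by auto
  have In: "I \<subseteq> {0..<n}" using IO unfolding Oset_def by auto
  have nR: "\<And>i. i \<in> I \<Longrightarrow> outflow i \<notin> Rs" using IO unfolding Oset_def by auto
  have finR: "finite R" using fin R finite_subset by blast
  have finI: "finite I" using In finite_subset by blast
  define ys where "ys = enum_rxns R"
  have ys: "distinct ys" "set ys = R" "length ys = s" unfolding ys_def using enum_rxns_props[OF finR] cR by auto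
  define zs where "zs = ys @ map (\<lambda>b. outflow (pick I b)) [0..<d]"
  define R' where "R' = R \<union> outflow ` I"
  have lz: "length zs = n" unfolding zs_def using ys n by simp
  have pI: "\<And>b. b < d \<Longrightarrow> pick I b \<in> I" using pick_in_lt[OF finI] cI by simp
  have sz: "set zs = R'"
  proof -
    have "set (map (\<lambda>b. outflow (pick I b)) [0..<d]) = outflow ` (pick I ` {0..<d})" by auto
    also have "pick I ` {0..<d} = I" using pick_image[OF finI] cI by simp
    finally show ?thesis unfolding zs_def R'_def using ys by simp
  qed
  have dz: "distinct zs"
  proof -
    have "distinct (map (\<lambda>b. outflow (pick I b)) [0..<d])"
      unfolding distinct_map
    proof
      show "inj_on (\<lambda>b. outflow (pick I b)) (set [0..<d])"
      proof (rule inj_onI)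
        fix a b assume "a \<in> set [0..<d]" "b \<in> set [0..<d]" "outflow (pick I a) = outflow (pick I b)"
        hence ab: "a < d" "b < d" "pick I a = pick I b" using outflow_inj by auto
        thus "a = b" using pick_eq_iff[of a I b] cI by simp
      qed
    qed simp
    moreover have "set ys \<inter> set (map (\<lambda>b. outflow (pick I b)) [0..<d]) = {}"
      using ys R nR pI by auto
    ultimately show ?thesis unfolding zs_def using ys by simp
  qed
  have cR': "card R' = n" using dz sz lz distinct_card by metis
  have finR': "finite R'" unfolding R'_def using finR finI by simp
  define ws where "ws = enum_rxns R'"
  have ws: "distinct ws" "set ws = R'" "length ws = n" unfolding ws_def using enum_rxns_props[OF finR'] cR' by auto
  have Y': "Ymat n R' = mat n n (\<lambda>(i,k). real (fst (ws ! k) i))" unfolding Ymat_def ws_def[symmetric] Let_def ws by simp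
  have G': "Gmat n R' = mat n n (\<lambda>(i,k). real (fst (ws ! k) i) - real (snd (ws ! k) i))" unfolding Gmat_def ws_def[symmetric] Let_def ws by simp
  have "det (Ymat n R') * det (Gmat n R') =
      det (mat n n (\<lambda>(i,k). real (fst (zs ! k) i))) * det (mat n n (\<lambda>(i,k). real (fst (zs ! k) i) - real (snd (zs ! k) i)))"
    unfolding Y' G' using reorder_prod[OF dz ws(1) _ lz, of "\<lambda>i r. real (fst r i)" "\<lambda>i r. real (fst r i) - real (snd r i)"] sz ws
    by simp
  also have "mat n n (\<lambda>(i,k). real (fst (zs ! k) i)) =
     mat n n (\<lambda>(i,k). if k < s then (\<lambda>i k. real (fst (ys ! k) i)) i k else (if i = pick I (k - s) then 1 else 0))"
  proof (rule eq_matI)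
    fix i k assume ik0: "i < dim_row (mat n n (\<lambda>(i,k). if k < s then (\<lambda>i k. real (fst (ys ! k) i)) i k else (if i = pick I (k - s) then 1 else 0)))"
      "k < dim_col (mat n n (\<lambda>(i,k). if k < s then (\<lambda>i k. real (fst (ys ! k) i)) i k else (if i = pick I (k - s) then 1 else 0)))"
    hence ik: "i < n" "k < n" by simp_all
    show "mat n n (\<lambda>(i,k). real (fst (zs ! k) i)) $$ (i,k) = mat n n (\<lambda>(i,k). if k < s then (\<lambda>i k. real (fst (ys ! k) i)) i k else (if i = pick I (k - s) then 1 else 0)) $$ (i,k)"
    proof (cases "k < s")
      case True thus ?thesis using ik by (simp add: zs_def ys nth_append gam_def)
    next
      case False
      hence "k - s < d" using ik n by simp
      thus ?thesis using False ik by (simp add: zs_def ys nth_append fst_outflow snd_outflow gam_def)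
    qed
  qed simp_all
  also have "mat n n (\<lambda>(i,k). real (fst (zs ! k) i) - real (snd (zs ! k) i)) =
     mat n n (\<lambda>(i,k). if k < s then (\<lambda>i k. gam (ys ! k) i) i k else (if i = pick I (k - s) then 1 else 0))"
  proof (rule eq_matI)
    fix i k assume ik0: "i < dim_row (mat n n (\<lambda>(i,k). if k < s then (\<lambda>i k. gam (ys ! k) i) i k else (if i = pick I (k - s) then 1 else 0)))"
      "k < dim_col (mat n n (\<lambda>(i,k). if k < s then (\<lambda>i k. gam (ys ! k) i) i k else (if i = pick I (k - s) then 1 else 0)))"
    hence ik: "i < n" "k < n" by simp_all
    show "mat n n (\<lambda>(i,k). real (fst (zs ! k) i) - real (snd (zs ! k) i)) $$ (i,k) = mat n n (\<lambda>(i,k). if k < s then (\<lambda>i k. gam (ys ! k) i) i k else (if i = pick I (k - s) then 1 else 0)) $$ (i,k)"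
    proof (cases "k < s")
      case True thus ?thesis using ik by (simp add: zs_def ys nth_append gam_def)
    next
      case False
      hence "k - s < d" using ik n by simp
      thus ?thesis using False ik by (simp add: zs_def ys nth_append fst_outflow snd_outflow gam_def)
    qed
  qed simp_all
  finally have e1: "det (Ymat n R') * det (Gmat n R') =
     det (mat n n (\<lambda>(i,k). if k < s then (\<lambda>i k. real (fst (ys ! k) i)) i k else (if i = pick I (k - s) then 1 else 0))) *
     det (mat n n (\<lambda>(i,k). if k < s then (\<lambda>i k. gam (ys ! k) i) i k else (if i = pick I (k - s) then 1 else 0)))" .
  obtain \<epsilon> :: real where e: "\<epsilon> * \<epsilon> = 1" and h: "\<And>g. det (mat n n (\<lambda>(i,k). if k < s then g i k else (if i = pick I (k - s) then 1 else 0)))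
            = \<epsilon> * det (mat s s (\<lambda>(a,l). g (pick ({0..<n} - I) a) l))"
    using det_outflow_block[OF In, of s] n cI by (auto simp: add.commute)
  have "det (Ymat n R') * det (Gmat n R') = (\<epsilon> * \<epsilon>) *
     (det (mat s s (\<lambda>(a,l). real (fst (ys ! l) (pick ({0..<n} - I) a)))) *
      det (mat s s (\<lambda>(a,l). gam (ys ! l) (pick ({0..<n} - I) a))))"
    unfolding e1 h by (simp add: ac_simps)
  also have "\<dots> = det (del_rows (Ymat n R) I) * det (del_rows (Gmat n R) I)"
    using e del_rows_YG[OF finR cR In cI n] unfolding ys_def by simp
  finally show ?thesis unfolding sigma_def R'_def by (simp add: mult.assoc)
qed

lemma step_F:
  assumes fin: "finite Rs" and R: "R \<subseteq> Rs" and cR: "card R = s" and n: "n = d + s"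
  shows "(-1)^d * X * (\<Sum>R'\<in>{R' \<in> Rs_sets n Rs s. R' \<inter> Rs = R}. sigma n R' * (\<Prod>i\<in>{i. outflow i \<in> R' - R}. c i))
    = (-1)^s * X * (\<Sum>I\<in>Od n Rs d. det (del_rows (Ymat n R) I) * det (del_rows (Gmat n R) I) * (\<Prod>i\<in>I. c i))"
proof -
  have nd: "n - s = d" using n by simp
  have nR: "\<And>I i. I \<in> Od n Rs d \<Longrightarrow> i \<in> I \<Longrightarrow> outflow i \<notin> Rs" unfolding Od_def Oset_def by auto
  have S: "{R' \<in> Rs_sets n Rs s. R' \<inter> Rs = R} = (\<lambda>I. R \<union> outflow ` I) ` Od n Rs d"
  proof
    show "{R' \<in> Rs_sets n Rs s. R' \<inter> Rs = R} \<subseteq> (\<lambda>I. R \<union> outflow ` I) ` Od n Rs d"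
    proof
      fix R' assume "R' \<in> {R' \<in> Rs_sets n Rs s. R' \<inter> Rs = R}"
      then obtain R0 I where R0: "R' = R0 \<union> outflow ` I" "R0 \<subseteq> Rs" "I \<in> Od n Rs d" and int: "R' \<inter> Rs = R"
        unfolding Rs_sets_def nd by auto
      have "R' \<inter> Rs = R0" using R0 nR[OF R0(3)] by auto
      hence "R0 = R" using int by simp
      thus "R' \<in> (\<lambda>I. R \<union> outflow ` I) ` Od n Rs d" using R0 by auto
    qed
    show "(\<lambda>I. R \<union> outflow ` I) ` Od n Rs d \<subseteq> {R' \<in> Rs_sets n Rs s. R' \<inter> Rs = R}"
    proof
      fix R' assume "R' \<in> (\<lambda>I. R \<union> outflow ` I) ` Od n Rs d"
      then obtain I where I: "I \<in> Od n Rs d" "R' = R \<union> outflow ` I" by auto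
      have "R' \<in> Rs_sets n Rs s" unfolding Rs_sets_def nd using I R cR by auto
      moreover have "R' \<inter> Rs = R" using I R nR[OF I(1)] by auto
      ultimately show "R' \<in> {R' \<in> Rs_sets n Rs s. R' \<inter> Rs = R}" by simp
    qed
  qed
  have inj: "inj_on (\<lambda>I. R \<union> outflow ` I) (Od n Rs d)"
  proof (rule inj_onI)
    fix I I' assume I: "I \<in> Od n Rs d" "I' \<in> Od n Rs d" "R \<union> outflow ` I = R \<union> outflow ` I'"
    have "outflow ` I = outflow ` I'"
    proof -
      have "outflow ` I = (R \<union> outflow ` I) - R" using R nR[OF I(1)] by auto
      also have "\<dots> = (R \<union> outflow ` I') - R" using I(3) by simp
      also have "\<dots> = outflow ` I'" using R nR[OF I(2)] by auto
      finally show ?thesis .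
    qed
    thus "I = I'" using outflow_inj by (metis inj_onI inj_image_eq_iff)
  qed
  have "(\<Sum>R'\<in>{R' \<in> Rs_sets n Rs s. R' \<inter> Rs = R}. sigma n R' * (\<Prod>i\<in>{i. outflow i \<in> R' - R}. c i)) =
      (\<Sum>I\<in>Od n Rs d. sigma n (R \<union> outflow ` I) * (\<Prod>i\<in>{i. outflow i \<in> (R \<union> outflow ` I) - R}. c i))"
    unfolding S by (simp add: sum.reindex[OF inj])
  also have "\<dots> = (\<Sum>I\<in>Od n Rs d. (-1)^n * (det (del_rows (Ymat n R) I) * det (del_rows (Gmat n R) I) * (\<Prod>i\<in>I. c i)))"
  proof (rule sum.cong[OF refl])
    fix I assume I: "I \<in> Od n Rs d"
    have "{i. outflow i \<in> (R \<union> outflow ` I) - R} = I"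
    proof
      show "{i. outflow i \<in> (R \<union> outflow ` I) - R} \<subseteq> I" using outflow_inj by auto
      show "I \<subseteq> {i. outflow i \<in> (R \<union> outflow ` I) - R}" using R nR[OF I] by auto
    qed
    thus "sigma n (R \<union> outflow ` I) * (\<Prod>i\<in>{i. outflow i \<in> (R \<union> outflow ` I) - R}. c i) =
      (-1)^n * (det (del_rows (Ymat n R) I) * det (del_rows (Gmat n R) I) * (\<Prod>i\<in>I. c i))"
      unfolding sigma_block[OF fin R cR n I] by simp
  qed
  also have "\<dots> = (-1)^n * (\<Sum>I\<in>Od n Rs d. det (del_rows (Ymat n R) I) * det (del_rows (Gmat n R) I) * (\<Prod>i\<in>I. c i))"
    by (simp add: sum_distrib_left)
  finally have eq: "(\<Sum>R'\<in>{R' \<in> Rs_sets n Rs s. R' \<inter> Rs = R}. sigma n R' * (\<Prod>i\<in>{i. outflow i \<in> R' - R}. c i)) =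
      (-1)^n * (\<Sum>I\<in>Od n Rs d. det (del_rows (Ymat n R) I) * det (del_rows (Gmat n R) I) * (\<Prod>i\<in>I. c i))" .
  have sg: "(-1::real)^d * (-1)^n = (-1)^s"
  proof -
    have "(-1::real)^d * (-1)^n = (-1)^(d + n)" by (simp add: power_add)
    also have "d + n = 2 * d + s" using n by simp
    also have "(-1::real)^(2 * d + s) = (-1)^s" by (simp add: power_add power_mult)
    finally show ?thesis .
  qed
  show ?thesis unfolding eq using sg by (simp add: ac_simps)
qed



theorem corollary7p3:
  fixes n s d :: nat and Rs :: "rxn set" and \<omega> :: "nat \<Rightarrow> nat \<Rightarrow> real"
  assumes net: "crn n Rs"
    and s_def: "s = stoich_dim n Rs"
    and d_def: "d = n - s"
    and red: "reduced_basis n Rs d \<omega>"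
  shows
    "\<exists>coef :: (nat \<Rightarrow> real) \<Rightarrow> rxn set \<Rightarrow> real.
       (\<forall>c \<kappa>. (\<forall>i<n. c i > 0) \<longrightarrow> (\<forall>r\<in>Rs. \<kappa> r > 0) \<longrightarrow>
          det (jacobian_mat n (ext_rate_fun n d \<omega> Rs \<kappa>) c) =
            (\<Sum>R\<in>{R. R \<subseteq> Rs \<and> card R = s}. coef c R * (\<Prod>r\<in>R. \<kappa> r))) \<and>
       (\<forall>c R. (\<forall>i<n. c i > 0) \<longrightarrow> R \<subseteq> Rs \<longrightarrow> card R = s \<longrightarrow>
          coef c R =
            (-1) ^ s * cpow n c (\<lambda>j. -1 + (\<Sum>r\<in>R. int (fst r j))) *
            (\<Sum>I\<in>Od n Rs d. det (del_rows (Ymat n R) I) * det (del_rows (Gmat n R) I)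
                              * (\<Prod>i\<in>I. c i)) \<and>
          coef c R =
            (-1) ^ d * cpow n c (\<lambda>j. -1 + (\<Sum>r\<in>R. int (fst r j))) *
            (\<Sum>R'\<in>{R' \<in> Rs_sets n Rs s. R' \<inter> Rs = R}.
                sigma n R' * (\<Prod>i\<in>{i. outflow i \<in> R' - R}. c i)))"
proof -
  have fin: "finite Rs" using net unfolding crn_def by simp
  have orth: "\<forall>i<d. \<forall>r\<in>Rs. (\<Sum>j<n. \<omega> i j * (real (snd r j) - real (fst r j))) = 0"
    and redf: "\<forall>i<d. \<omega> i i = 1 \<and> (\<forall>j<d. j \<noteq> i \<longrightarrow> \<omega> i j = 0)"
    using red unfolding reduced_basis_def by auto
  have "Gmat n Rs \<in> carrier_mat n (length (enum_rxns Rs))" unfolding Gmat_def Let_def by simp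
  hence "s \<le> n" unfolding s_def stoich_dim_def by (rule rank_le_n)
  hence n: "n = d + s" using d_def by simp
  define \<Phi> where "\<Phi> c R = (-1)^s * cpow n c (\<lambda>j. -1 + (\<Sum>r\<in>R. int (fst r j))) *
            (\<Sum>I\<in>Od n Rs d. det (del_rows (Ymat n R) I) * det (del_rows (Gmat n R) I)
                              * (\<Prod>i\<in>I. c i))" for c :: "nat \<Rightarrow> real" and R
  show ?thesis
  proof (rule exI[of _ \<Phi>], intro conjI allI impI)
    fix c :: "nat \<Rightarrow> real" and \<kappa> :: "rxn \<Rightarrow> real"
    assume c: "\<forall>i<n. 0 < c i" and "\<forall>r\<in>Rs. 0 < \<kappa> r"
    have coef: "coefL n d s \<omega> c xs = \<Phi> c (set xs)" if "distinct xs" "set xs \<subseteq> Rs" "length xs = s" for xs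
      unfolding \<Phi>_def by (rule step_E[OF c orth redf n that])
    show "det (jacobian_mat n (ext_rate_fun n d \<omega> Rs \<kappa>) c) =
            (\<Sum>R\<in>{R. R \<subseteq> Rs \<and> card R = s}. \<Phi> c R * (\<Prod>r\<in>R. \<kappa> r))"
      unfolding step_A[OF c redf n] by (rule step_BCD[OF fin n coef])
  next
    fix c :: "nat \<Rightarrow> real" and R
    assume "\<forall>i<n. 0 < c i" and R: "R \<subseteq> Rs" and cR: "card R = s"
    show "\<Phi> c R = (-1) ^ s * cpow n c (\<lambda>j. -1 + (\<Sum>r\<in>R. int (fst r j))) *
            (\<Sum>I\<in>Od n Rs d. det (del_rows (Ymat n R) I) * det (del_rows (Gmat n R) I)
                              * (\<Prod>i\<in>I. c i))" unfolding \<Phi>_def ..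
    show "\<Phi> c R = (-1) ^ d * cpow n c (\<lambda>j. -1 + (\<Sum>r\<in>R. int (fst r j))) *
            (\<Sum>R'\<in>{R' \<in> Rs_sets n Rs s. R' \<inter> Rs = R}.
                sigma n R' * (\<Prod>i\<in>{i. outflow i \<in> R' - R}. c i))"
      unfolding \<Phi>_def by (rule step_F[OF fin R cR n, symmetric])
  qed
qed


end
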